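(* Let $\Omega:[0,\infty)\to(0,\infty)$ be a continuous function increasing to infinity such that $\int_1^\infty \Omega(r)\,\frac{dr}{r^2}<\infty$, $\int_{\mathbb{R}^d} \exp(-\Omega(\|x\|))\,dx<\infty$, and $\Omega(r)>r^a$ on some interval $[r_0,\infty)$ for some $a<1$. Assume that $\Lambda\subseteq\widehat{\mathbb{R}}^d$ is a compact S-set of strict multiplicity, that $E\subseteq\mathbb{R}^d$ is a separated sequence, and that balayage is possible for $(E,\Lambda)$. Let $\epsilon>0$ be such that $K(E,\Lambda_\epsilon)<\infty$ (such $\epsilon$ exists). For this $\epsilon$, let $h\in L^1(\mathbb{R}^d)$ satisfy $h(0)=1$, $\operatorname{supp}(\widehat h)\subseteq\overline{B(0,\epsilon)}$, and $|h(x)|=O(e^{-\Omega(\|x\|)})$ as $\|x\|\to\infty$ (such $h$ exists). Then for each $y\in\mathbb{R}^d$ there are complex numbers $\{a_x(y)\}_{x\in E}$ (coming from balayage of $\delta_y$ onto $E$ for $\Lambda_\epsilon$, i.e. $\widehat{\delta_y}=\big(\sum_{x\in E}a_x(y)\delta_x\big)^\wedge$ on $\Lambda_\epsilon$) such that $$\sup_{y\in\mathbb{R}^d}\sum_{x\in E}|a_x(y)|\le K(E,\Lambda_\epsilon)<\infty$$ and $$\forall y\in\mathbb{R}^d,\ \forall f\in\mathcal{C}(\Lambda),\quad f(y)=\sum_{x\in E}f(x)\,a_x(y)\,h(x-y).$$ In particular, for all $y\in\mathbb{R}^d$ and $\gamma\in\Lambda$, $e^{2\pi i y\cdot\gamma}=\sum_{x\in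 E}a_x(y)h(x-y)e^{2\pi i x\cdot\gamma}$.
   Context: Fourier transform: $\widehat f(\gamma)=\int f(x)e^{-2\pi i x\cdot\gamma}dx$, $F^\vee(x)=\int F(\gamma)e^{2\pi i x\cdot\gamma}d\gamma$, extended to tempered distributions; $\widehat{\mathbb{R}}^d$ denotes $\mathbb{R}^d$ as the frequency domain. For closed $X$, $M_b(X)$ is the space of bounded complex Radon measures with support in $X$, with total variation norm $\|\cdot\|_1$. For closed $\Lambda\subseteq\widehat{\mathbb{R}}^d$, $\mathcal{C}(\Lambda)=\{f\in C_b(\mathbb{R}^d):\operatorname{supp}(\widehat f)\subseteq\Lambda\}$. For closed $E\subseteq\mathbb{R}^d$, balayage is possible for $(E,\Lambda)$ if for every $\mu\in M_b(\mathbb{R}^d)$ there is $\nu\in M_b(E)$ with $\widehat\mu=\widehat\nu$ on $\Lambda$. $K(E,\Lambda)$ is the smallest $K\ge0$ such that for all $\mu\in M_b(\mathbb{R}^d)$, $\inf\{\|\nu\|_1:\nu\in M_b(E),\ \widehat\nu=\widehat\mu\text{ on }\Lambda\}\le K\|\mu\|_1$ ($K(E,\Lambda)=\infty$ if no such $K$). A closed $\Lambda$ is an S-set (set of spectral synthesis) if for all $f\in\mathcal{C}(\Lambda)$ and $\mu\in M_b(\mathbb{R}^d)$ with $\widehat\mu=0$ on $\Lambda$ one has $\int f\,d\mu=0$. A closed $\Lambda$ is a set of strict multiplicity if there is $\mu\in M_b(\Lambda)\setminus\{0\}$ with $|\mu^\vee(x)|\to0$ as $\|x\|\to\infty$. $E$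 is separated if $\inf\{\|x-y\|:x,y\in E,\ x\ne y\}>0$. $\Lambda_\epsilon=\{\gamma\in\widehat{\mathbb{R}}^d:\operatorname{dist}(\gamma,\Lambda)\le\epsilon\}$. *)

theory Defs
  imports "HOL-Analysis.Analysis"
begin

text \<open>A bounded complex Radon measure on R^d (type 'a) is represented as g \<cdot> M where
  M is a finite Borel measure (the total variation |mu|) and g is an M-integrable complex
  density; every bounded complex Radon measure on R^d has such a representation (polar
  decomposition), and every such pair defines one.\<close>

definition bcm :: "'a::euclidean_space measure \<Rightarrow> ('a \<Rightarrow> complex) \<Rightarrow> bool" where
  "bcm M g \<longleftrightarrow> sets M = sets borel \<and> finite_measure M \<and> integrable M g"

definition tvnorm :: "'a::euclidean_space measure \<Rightarrow> ('a \<Rightarrow> complex) \<Rightarrow> real" where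
  "tvnorm M g = (\<integral>x. cmod (g x) \<partial>M)"

definition supp_in :: "'a::euclidean_space measure \<Rightarrow> ('a \<Rightarrow> complex) \<Rightarrow> 'a set \<Rightarrow> bool" where
  "supp_in M g X \<longleftrightarrow> (AE x in M. x \<notin> X \<longrightarrow> g x = 0)"

definition Mb :: "'a::euclidean_space set \<Rightarrow> ('a measure \<times> ('a \<Rightarrow> complex)) set" where
  "Mb X = {(M, g). bcm M g \<and> supp_in M g X}"

definition ftm :: "'a::euclidean_space measure \<Rightarrow> ('a \<Rightarrow> complex) \<Rightarrow> 'a \<Rightarrow> complex" where
  "ftm M g \<gamma> = (\<integral>x. g x * cis (- 2 * pi * (x \<bullet> \<gamma>)) \<partial>M)"

definition iftm :: "'a::euclidean_space measure \<Rightarrow> ('a \<Rightarrow> complex) \<Rightarrow> 'a \<Rightarrow> complex" where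
  "iftm M g x = (\<integral>\<gamma>. g \<gamma> * cis (2 * pi * (x \<bullet> \<gamma>)) \<partial>M)"

definition ft :: "('a::euclidean_space \<Rightarrow> complex) \<Rightarrow> 'a \<Rightarrow> complex" where
  "ft f \<gamma> = (\<integral>x. f x * cis (- 2 * pi * (x \<bullet> \<gamma>)) \<partial>lborel)"

definition dpart :: "'a::euclidean_space \<Rightarrow> ('a \<Rightarrow> complex) \<Rightarrow> 'a \<Rightarrow> complex" where
  "dpart v f x = vector_derivative (\<lambda>t::real. f (x + t *\<^sub>R v)) (at 0)"

definition smooth_fun :: "('a::euclidean_space \<Rightarrow> complex) \<Rightarrow> bool" where
  "smooth_fun f \<longleftrightarrow> (\<forall>vs. set vs \<subseteq> Basis \<longrightarrow>
      continuous_on UNIV (foldr dpart vs f) \<and>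
      (\<forall>v\<in>Basis. \<forall>x. ((\<lambda>t::real. foldr dpart vs f (x + t *\<^sub>R v))
          has_vector_derivative dpart v (foldr dpart vs f) x) (at 0)))"

definition tsupport :: "('a::euclidean_space \<Rightarrow> complex) \<Rightarrow> 'a set" where
  "tsupport f = closure {x. f x \<noteq> 0}"

definition test_fun :: "('a::euclidean_space \<Rightarrow> complex) \<Rightarrow> bool" where
  "test_fun \<psi> \<longleftrightarrow> smooth_fun \<psi> \<and> compact (tsupport \<psi>)"

text \<open>For f in C_b, supp(f^) \<subseteq> \<Lambda> in the sense of tempered distributions:
  <f^, psi> = <f, psi^> = 0 for every test function psi supported off \<Lambda>.\<close>
definition fsupp_in :: "('a::euclidean_space \<Rightarrow> complex) \<Rightarrow> 'a set \<Rightarrow> bool" where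
  "fsupp_in f \<Lambda> \<longleftrightarrow> (\<forall>\<psi>. test_fun \<psi> \<and> tsupport \<psi> \<inter> \<Lambda> = {} \<longrightarrow>
      (\<integral>x. f x * ft \<psi> x \<partial>lborel) = 0)"

definition Cspec :: "'a::euclidean_space set \<Rightarrow> ('a \<Rightarrow> complex) set" where
  "Cspec \<Lambda> = {f. continuous_on UNIV f \<and> bounded (range f) \<and> fsupp_in f \<Lambda>}"

definition balayage :: "'a::euclidean_space set \<Rightarrow> 'a set \<Rightarrow> bool" where
  "balayage E \<Lambda> \<longleftrightarrow> (\<forall>M g. bcm M g \<longrightarrow>
     (\<exists>(N, k)\<in>Mb E. \<forall>\<gamma>\<in>\<Lambda>. ftm N k \<gamma> = ftm M g \<gamma>))"

definition bal_inf :: "'a::euclidean_space set \<Rightarrow> 'a set \<Rightarrow> 'a measure \<Rightarrow> ('a \<Rightarrow> complex) \<Rightarrow> ereal" where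
  "bal_inf E \<Lambda> M g = (INF (N, k)\<in>{(N, k)\<in>Mb E. \<forall>\<gamma>\<in>\<Lambda>. ftm N k \<gamma> = ftm M g \<gamma>}.
       ereal (tvnorm N k))"

text \<open>K(E,\<Lambda>), with value \<infinity> if no finite constant works.\<close>
definition Kbal :: "'a::euclidean_space set \<Rightarrow> 'a set \<Rightarrow> ereal" where
  "Kbal E \<Lambda> = Inf {K. 0 \<le> K \<and> (\<forall>M g. bcm M g \<longrightarrow> bal_inf E \<Lambda> M g \<le> K * ereal (tvnorm M g))}"

definition S_set :: "'a::euclidean_space set \<Rightarrow> bool" where
  "S_set \<Lambda> \<longleftrightarrow> closed \<Lambda> \<and> (\<forall>f\<in>Cspec \<Lambda>. \<forall>M g. bcm M g \<and> (\<forall>\<gamma>\<in>\<Lambda>. ftm M g \<gamma> = 0) \<longrightarrow>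
      (\<integral>x. f x * g x \<partial>M) = 0)"

definition strict_mult :: "'a::euclidean_space set \<Rightarrow> bool" where
  "strict_mult \<Lambda> \<longleftrightarrow> closed \<Lambda> \<and> (\<exists>M g. (M, g) \<in> Mb \<Lambda> \<and> \<not> (AE x in M. g x = 0) \<and>
      ((\<lambda>x. cmod (iftm M g x)) \<longlongrightarrow> 0) at_infinity)"

definition separated :: "'a::euclidean_space set \<Rightarrow> bool" where
  "separated E \<longleftrightarrow> (\<exists>\<delta>>0. \<forall>x\<in>E. \<forall>y\<in>E. x \<noteq> y \<longrightarrow> \<delta> \<le> dist x y)"

definition nbhd :: "'a::euclidean_space set \<Rightarrow> real \<Rightarrow> 'a set" where
  "nbhd \<Lambda> \<epsilon> = {\<gamma>. infdist \<gamma> \<Lambda> \<le> \<epsilon>}"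

end

theory Submission
  imports Defs "HOL-Probability.Characteristic_Functions" "HOL-Probability.Giry_Monad" "HOL-Library.Diagonal_Subsequence"
begin


lemma gauss1d_std:
  "(\<integral>x. complex_of_real (exp (- x\<^sup>2 / 2)) * iexp (t * x) \<partial>lborel) = sqrt (2 * pi) * exp (- t\<^sup>2 / 2)"
proof -
  have "char std_normal_distribution t = exp (- t\<^sup>2 / 2)"
    by (simp add: char_std_normal_distribution)
  moreover have "char std_normal_distribution t = (\<integral>x. std_normal_density x *\<^sub>R iexp (t * x) \<partial>lborel)"
    unfolding char_def by (subst integral_density) (auto simp: normal_density_nonneg)
  ultimately have "(\<integral>x. std_normal_density x *\<^sub>R iexp (t * x) \<partial>lborel) = exp (- t\<^sup>2 / 2)" by simp
  moreover have "(\<lambda>x. std_normal_density x *\<^sub>R iexp (t * x)) = (\<lambda>x. (1 / sqrt (2 * pi)) * (complex_of_real (exp (- x\<^sup>2 / 2)) * iexp (t * x)))"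
    by (auto simp: std_normal_density_def scaleR_conv_of_real)
  ultimately have "(1 / sqrt (2 * pi)) * (\<integral>x. complex_of_real (exp (- x\<^sup>2 / 2)) * iexp (t * x) \<partial>lborel) = exp (- t\<^sup>2 / 2)"
    by simp
  then show ?thesis by (simp add: field_simps)
qed

lemma integrable_gauss_std: "integrable lborel (\<lambda>x::real. exp (- x\<^sup>2 / 2))"
proof -
  have "integrable lborel (\<lambda>x. std_normal_density x * x ^ (2*0))"
    using std_normal_moment_even[of 0] by (auto simp: has_bochner_integral_iff)
  then have "integrable lborel (\<lambda>x. sqrt (2 * pi) * std_normal_density x)" by simp
  also have "(\<lambda>x. sqrt (2 * pi) * std_normal_density x) = (\<lambda>x. exp (- x\<^sup>2 / 2))"
    by (auto simp: std_normal_density_def)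
  finally show ?thesis .
qed

lemma integrable_gauss1d:
  assumes a: "a > 0"
  shows "integrable lborel (\<lambda>s::real. exp (- pi * (a * s)^2))"
proof -
  define c where "c = sqrt (2 * pi) * a"
  have c: "c \<noteq> 0" using a by (simp add: c_def)
  have "integrable lborel (\<lambda>x. exp (- ((c * x)^2) / 2))"
    using lborel_integrable_real_affine[OF integrable_gauss_std c, of 0] by simp
  also have "(\<lambda>x. exp (- ((c * x)^2) / 2)) = (\<lambda>s::real. exp (- pi * (a * s)^2))"
    by (auto simp: c_def power_mult_distrib)
  finally show ?thesis .
qed

lemma gauss1d:
  assumes a: "a > 0"
  shows "(\<integral>s. complex_of_real (exp (- pi * (a * s)^2)) * cis (2 * pi * w * s) \<partial>lborel)
          = complex_of_real (exp (- pi * (w / a)^2) / a)"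
proof -
  define c where "c = 1 / (sqrt (2 * pi) * a)"
  have c: "c \<noteq> 0" "c > 0" using a by (auto simp: c_def)
  define T where "T = sqrt (2 * pi) * w / a"
  let ?f = "\<lambda>s. complex_of_real (exp (- pi * (a * s)^2)) * cis (2 * pi * w * s)"
  have "(\<integral>s. ?f s \<partial>lborel) = \<bar>c\<bar> *\<^sub>R (\<integral>x. ?f (0 + c * x) \<partial>lborel)"
    by (rule lborel_integral_real_affine[OF c(1)])
  also have "(\<lambda>x. ?f (0 + c * x)) = (\<lambda>x. complex_of_real (exp (- x\<^sup>2 / 2)) * iexp (T * x))"
  proof
    fix x
    have 1: "pi * (a * (c * x))^2 = x\<^sup>2/2" using a
      by (simp add: c_def power_mult_distrib power_divide field_simps)
    have 2: "2 * pi * w * (c * x) = T * x" using a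
      by (simp add: c_def T_def field_simps)
    have 3: "exp (- pi * (a * (c * x))^2) = exp (- x\<^sup>2 / 2)" using 1 by simp
    have 4: "cis (2 * pi * w * (c * x)) = iexp (T * x)" unfolding cis_conv_exp 2 by simp
    show "?f (0 + c * x) = complex_of_real (exp (- x\<^sup>2 / 2)) * iexp (T * x)"
      using 3 4 by simp
  qed
  also have "(\<integral>x. complex_of_real (exp (- x\<^sup>2 / 2)) * iexp (T * x) \<partial>lborel) = sqrt (2 * pi) * exp (- T\<^sup>2 / 2)"
    by (rule gauss1d_std)
  finally have "(\<integral>s. ?f s \<partial>lborel) = c *\<^sub>R (sqrt (2 * pi) * exp (- T\<^sup>2 / 2))" using c by (simp add: scaleR_conv_of_real)
  also have "\<dots> = complex_of_real (exp (- pi * (w / a)^2) / a)"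
  proof -
    have e1: "exp (- T\<^sup>2 / 2) = exp (- pi * (w / a)^2)" by (simp add: T_def power_mult_distrib power_divide)
    have e2: "c * sqrt (2 * pi) = 1 / a" using a by (simp add: c_def)
    have "c *\<^sub>R (sqrt (2 * pi) * exp (- T\<^sup>2 / 2)) = (c * sqrt (2 * pi)) * exp (- T\<^sup>2 / 2)"
      by simp
    also have "\<dots> = exp (- pi * (w / a)^2) / a"
      unfolding e1 e2 by simp
    finally show ?thesis by simp
  qed
  finally show ?thesis .
qed



lemma lborel_prod_integral:
  fixes f :: "'a::euclidean_space \<Rightarrow> real \<Rightarrow> complex"
  assumes int: "\<And>b. b \<in> Basis \<Longrightarrow> integrable lborel (f b)"
  shows "integrable (lborel::'a measure) (\<lambda>x. \<Prod>b\<in>Basis. f b (x \<bullet> b))"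
    and "(\<integral>x. (\<Prod>b\<in>Basis. f b (x \<bullet> b)) \<partial>(lborel::'a measure)) = (\<Prod>b\<in>Basis. \<integral>t. f b t \<partial>lborel)"
proof -
  interpret P: product_sigma_finite "\<lambda>_::'a. lborel::real measure"
    by (simp add: product_sigma_finite_def lborel.sigma_finite_measure_axioms)
  define \<Phi> where "\<Phi> = (\<lambda>g::'a\<Rightarrow>real. \<Sum>b\<in>Basis. g b *\<^sub>R b)"
  have mPhi: "\<Phi> \<in> measurable (\<Pi>\<^sub>M b\<in>Basis. lborel) borel"
    unfolding \<Phi>_def by measurable
  have fm[measurable]: "b \<in> Basis \<Longrightarrow> f b \<in> borel_measurable borel" for b
    using int[of b] by auto
  have gm: "(\<lambda>x. \<Prod>b\<in>Basis. f b (x \<bullet> b)) \<in> borel_measurable borel"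
    by measurable
  have comp: "(\<Prod>b\<in>Basis. f b (\<Phi> g \<bullet> b)) = (\<Prod>b\<in>Basis. f b (g b))" for g
  proof (rule prod.cong[OF refl])
    fix b :: 'a assume b: "b \<in> Basis"
    have "\<Phi> g \<bullet> b = g b"
      unfolding \<Phi>_def inner_sum_left using b
      by (simp add: inner_Basis if_distrib cong: if_cong) 
    then show "f b (\<Phi> g \<bullet> b) = f b (g b)" by simp
  qed
  have L: "lborel = distr (\<Pi>\<^sub>M b\<in>Basis. lborel) borel \<Phi>"
    unfolding \<Phi>_def by (rule lborel_eq)
  have iP: "integrable (\<Pi>\<^sub>M b\<in>Basis. lborel) (\<lambda>g. \<Prod>b\<in>Basis. f b (g b))"
    by (rule P.product_integrable_prod) (auto intro: int)
  show "integrable (lborel::'a measure) (\<lambda>x. \<Prod>b\<in>Basis. f b (x \<bullet> b))"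
    apply (subst L)
    apply (subst integrable_distr_eq[OF mPhi gm])
    using iP by (simp add: comp)
  have "(\<integral>x. (\<Prod>b\<in>Basis. f b (x \<bullet> b)) \<partial>(lborel::'a measure))
      = (\<integral>g. (\<Prod>b\<in>Basis. f b (\<Phi> g \<bullet> b)) \<partial>(\<Pi>\<^sub>M b\<in>Basis. lborel))"
    apply (subst L) by (rule integral_distr[OF mPhi gm])
  also have "\<dots> = (\<integral>g. (\<Prod>b\<in>Basis. f b (g b)) \<partial>(\<Pi>\<^sub>M b\<in>Basis. lborel))"
    by (simp add: comp)
  also have "\<dots> = (\<Prod>b\<in>Basis. \<integral>t. f b t \<partial>lborel)"
    by (rule P.product_integral_prod) (auto intro: int)
  finally show "(\<integral>x. (\<Prod>b\<in>Basis. f b (x \<bullet> b)) \<partial>(lborel::'a measure)) = (\<Prod>b\<in>Basis. \<integral>t. f b t \<partial>lborel)" .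
qed

lemma integrable_mult_bounded:
  fixes f g :: "_ \<Rightarrow> 'b::{real_normed_field,banach,second_countable_topology}"
  assumes f: "integrable M f" and g: "g \<in> borel_measurable M" and B: "\<And>x. norm (g x) \<le> B"
  shows "integrable M (\<lambda>x. f x * g x)"
proof -
  have B0: "0 \<le> B" using B[of undefined] norm_ge_zero order_trans by blast
  show ?thesis
  proof (rule Bochner_Integration.integrable_bound[where f="\<lambda>x. of_real B * f x"])
    show "integrable M (\<lambda>x. of_real B * f x)" using f by simp
    show "(\<lambda>x. f x * g x) \<in> borel_measurable M" using f g by measurable
    show "AE x in M. norm (f x * g x) \<le> norm (of_real B * f x)"
      using B B0 by (auto simp: norm_mult intro!: AE_I2) (metis mult.commute mult_left_mono norm_ge_zero)
  qed
qed

lemma norm_sq_Basis: "(norm (x::'a::euclidean_space))^2 = (\<Sum>b\<in>Basis. (x \<bullet> b)^2)"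
proof -
  have "(norm x)^2 = x \<bullet> x" by (rule power2_norm_eq_inner)
  also have "\<dots> = (\<Sum>b\<in>Basis. (x \<bullet> b) * (x \<bullet> b))" by (rule euclidean_inner)
  finally show ?thesis by (simp add: power2_eq_square)
qed

lemma cis_measurable[measurable]: "cis \<in> borel_measurable borel"
  by (intro borel_measurable_continuous_onI continuous_intros)

lemma cis_sum: "finite A \<Longrightarrow> cis (\<Sum>i\<in>A. f i) = (\<Prod>i\<in>A. cis (f i))"
  by (induct rule: finite_induct) (auto simp: cis_mult[symmetric])

lemma gauss_prod_form:
  fixes \<xi> u :: "'a::euclidean_space"
  shows "complex_of_real (exp (- pi * t^2 * (norm \<xi>)^2)) * cis (2 * pi * (u \<bullet> \<xi>))
    = (\<Prod>b\<in>Basis. complex_of_real (exp (- pi * (t * (\<xi> \<bullet> b))^2)) * cis (2 * pi * (u \<bullet> b) * (\<xi> \<bullet> b)))"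
proof -
  have 1: "- pi * t^2 * (norm \<xi>)^2 = (\<Sum>b\<in>Basis. - pi * (t * (\<xi> \<bullet> b))^2)"
    by (simp add: norm_sq_Basis sum_distrib_left power_mult_distrib mult_ac)
  have 2: "2 * pi * (u \<bullet> \<xi>) = (\<Sum>b\<in>Basis. 2 * pi * (u \<bullet> b) * (\<xi> \<bullet> b))"
    by (simp add: euclidean_inner[of u \<xi>] sum_distrib_left mult_ac)
  show ?thesis
    unfolding 1 2 exp_sum[OF finite_Basis] cis_sum[OF finite_Basis] of_real_prod prod.distrib ..
qed

lemma integrable_gauss:
  assumes t: "t > 0"
  shows "integrable (lborel::'a::euclidean_space measure) (\<lambda>\<xi>. exp (- pi * t^2 * (norm \<xi>)^2))"
proof -
  have "integrable (lborel::'a measure) (\<lambda>\<xi>. \<Prod>b\<in>Basis. complex_of_real (exp (- pi * (t * (\<xi> \<bullet> b))^2)))"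
    by (rule lborel_prod_integral(1)) (rule integrable_of_real[OF integrable_gauss1d[OF t]])
  also have "(\<lambda>\<xi>::'a. \<Prod>b\<in>Basis. complex_of_real (exp (- pi * (t * (\<xi> \<bullet> b))^2)))
      = (\<lambda>\<xi>. complex_of_real (exp (- pi * t^2 * (norm \<xi>)^2)))"
  proof (rule ext)
    fix \<xi> :: 'a
    show "(\<Prod>b\<in>Basis. complex_of_real (exp (- pi * (t * (\<xi> \<bullet> b))^2))) = complex_of_real (exp (- pi * t^2 * (norm \<xi>)^2))"
      using gauss_prod_form[of t \<xi> 0, symmetric] by simp
  qed
  finally show ?thesis by (simp add: complex_of_real_integrable_eq) 
qed

lemma gauss_ft:
  fixes u :: "'a::euclidean_space"
  assumes t: "t > 0"
  shows "(\<integral>\<xi>. complex_of_real (exp (- pi * t^2 * (norm \<xi>)^2)) * cis (2 * pi * (u \<bullet> \<xi>)) \<partial>lborel)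
     = complex_of_real (exp (- pi * (norm u / t)^2) / t ^ DIM('a))"
proof -
  have "(\<integral>\<xi>. complex_of_real (exp (- pi * t^2 * (norm \<xi>)^2)) * cis (2 * pi * (u \<bullet> \<xi>)) \<partial>lborel)
     = (\<integral>\<xi>. (\<Prod>b\<in>Basis. complex_of_real (exp (- pi * (t * (\<xi> \<bullet> b))^2)) * cis (2 * pi * (u \<bullet> b) * (\<xi> \<bullet> b))) \<partial>lborel)"
    by (simp only: gauss_prod_form)
  also have "\<dots> = (\<Prod>b\<in>Basis. \<integral>s. complex_of_real (exp (- pi * (t * s)^2)) * cis (2 * pi * (u \<bullet> b) * s) \<partial>lborel)"
  proof (rule lborel_prod_integral(2))
    fix b :: 'a
    show "integrable lborel (\<lambda>s. complex_of_real (exp (- pi * (t * s)^2)) * cis (2 * pi * (u \<bullet> b) * s))"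
      apply (rule integrable_mult_bounded[where B=1])
      apply (rule integrable_of_real[OF integrable_gauss1d[OF t]])
      by auto
  qed
  also have "\<dots> = (\<Prod>b\<in>Basis. complex_of_real (exp (- pi * ((u \<bullet> b) / t)^2) / t))"
    by (intro prod.cong refl gauss1d[OF t])
  also have "\<dots> = complex_of_real (exp (- pi * (norm u / t)^2) / t ^ DIM('a))"
  proof -
    have "(\<Prod>b\<in>Basis. exp (- pi * ((u \<bullet> b) / t)^2) / t) = exp (\<Sum>b\<in>Basis. - pi * ((u \<bullet> b) / t)^2) / t ^ DIM('a)"
      by (simp add: exp_sum prod_dividef)
    also have "(\<Sum>b\<in>Basis. - pi * ((u \<bullet> b) / t)^2) = - pi * (norm u / t)^2"
      by (simp add: norm_sq_Basis power_divide sum_distrib_left sum_divide_distrib)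
    finally have X: "(\<Prod>b\<in>Basis. exp (- pi * ((u \<bullet> b) / t)^2) / t) = exp (- pi * (norm u / t)^2) / t ^ DIM('a)" .
    have "(\<Prod>b\<in>Basis. complex_of_real (exp (- pi * ((u \<bullet> b) / t)^2) / t)) = complex_of_real (\<Prod>b\<in>Basis. exp (- pi * ((u \<bullet> b) / t)^2) / t)"
      by (rule of_real_prod[symmetric])
    then show ?thesis unfolding X .
  qed
  finally show ?thesis .
qed



lemma lborel_integral_affine_euclid:
  fixes g :: "'a::euclidean_space \<Rightarrow> 'b::{banach,second_countable_topology}"
  assumes c: "c \<noteq> 0" and gm: "g \<in> borel_measurable borel"
  shows "(\<integral>x. g x \<partial>lborel) = (\<bar>c\<bar>^DIM('a)) *\<^sub>R (\<integral>x. g (t + c *\<^sub>R x) \<partial>lborel)"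
proof -
  have L: "lborel = density (distr lborel borel (\<lambda>x. t + c *\<^sub>R x)) (\<lambda>_. ennreal (\<bar>c\<bar>^DIM('a)))"
    using lborel_affine[OF c, of t] by (simp add: ennreal_power)
  have m: "(\<lambda>x::'a. t + c *\<^sub>R x) \<in> measurable lborel borel" by measurable
  have "(\<integral>x. g x \<partial>lborel) = (\<integral>x. g x \<partial>(density (distr lborel borel (\<lambda>x. t + c *\<^sub>R x)) (\<lambda>_. ennreal (\<bar>c\<bar>^DIM('a)))))"
    using L by (rule arg_cong)
  also have "\<dots> = (\<integral>x. (\<bar>c\<bar>^DIM('a)) *\<^sub>R g x \<partial>(distr lborel borel (\<lambda>x. t + c *\<^sub>R x)))"
    by (rule integral_density) (auto simp: gm)
  also have "\<dots> = (\<integral>x. (\<bar>c\<bar>^DIM('a)) *\<^sub>R g (t + c *\<^sub>R x) \<partial>lborel)"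
    by (rule integral_distr[OF m]) (use gm in measurable)
  also have "\<dots> = (\<bar>c\<bar>^DIM('a)) *\<^sub>R (\<integral>x. g (t + c *\<^sub>R x) \<partial>lborel)"
    by simp
  finally show ?thesis .
qed

definition gk :: "real \<Rightarrow> 'a::euclidean_space \<Rightarrow> real" where
  "gk t \<xi> = exp (- pi * t^2 * (norm \<xi>)^2)"

lemma gk_le1: "t \<ge> 0 \<Longrightarrow> gk t \<xi> \<le> 1" and gk_pos: "gk t \<xi> > 0"
  by (auto simp: gk_def)

lemma gk_measurable[measurable]: "gk t \<in> borel_measurable borel"
  unfolding gk_def by measurable

lemma ft_f_cis_mult:
  "cis (- 2 * pi * (x \<bullet> \<xi>)) * cis (2 * pi * (z \<bullet> \<xi>)) = cis (2 * pi * ((z - x) \<bullet> \<xi>))"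
  by (simp add: cis_mult inner_diff_left algebra_simps)

lemma gauss_total: "(\<integral>v. exp (- pi * (norm (v::'a::euclidean_space))^2) \<partial>lborel) = 1"
proof -
  have "(\<integral>\<xi>. complex_of_real (exp (- pi * 1^2 * (norm (\<xi>::'a))^2)) * cis (2 * pi * (0 \<bullet> \<xi>)) \<partial>lborel) = 1"
    using gauss_ft[of 1 "0::'a"] by simp
  then have "complex_of_real (\<integral>v. exp (- pi * (norm (v::'a::euclidean_space))^2) \<partial>lborel) = 1"
    by simp
  then show ?thesis by (simp add: complex_eq_iff)
qed

theorem fourier_inversion:
  fixes f :: "'a::euclidean_space \<Rightarrow> complex"
  assumes f_int: "integrable lborel f" and f_cont: "continuous_on UNIV f"
    and f_bdd: "\<And>x. norm (f x) \<le> B" and F_int: "integrable lborel (ft f)"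
  shows "f z = (\<integral>\<xi>. ft f \<xi> * cis (2 * pi * (z \<bullet> \<xi>)) \<partial>lborel)"
proof -
  have fm[measurable]: "f \<in> borel_measurable borel" using f_int by auto
  have Fm[measurable]: "ft f \<in> borel_measurable borel" using F_int by auto
  define I where "I t = (\<integral>\<xi>. ft f \<xi> * cis (2 * pi * (z \<bullet> \<xi>)) * gk t \<xi> \<partial>lborel)" for t
  define J where "J t = (\<integral>v. f (z + (- t) *\<^sub>R v) * exp (- pi * (norm v)^2) \<partial>lborel)" for t
  have IJ: "I t = J t" if t: "t > 0" for t
  proof -
    define H where "H x \<xi> = f x * (complex_of_real (gk t \<xi>) * cis (2 * pi * ((z - x) \<bullet> \<xi>)))" for x \<xi>
    have Hm[measurable]: "(\<lambda>(x, \<xi>). H x \<xi>) \<in> borel_measurable (lborel \<Otimes>\<^sub>M lborel)"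
      unfolding H_def by measurable
    have gint: "integrable lborel (gk t :: 'a \<Rightarrow> real)"
      using integrable_gauss[OF t] unfolding gk_def[abs_def] .
    have Hint_inner: "integrable lborel (\<lambda>\<xi>. H x \<xi>)" for x
    proof -
      have "integrable lborel (\<lambda>\<xi>. complex_of_real (gk t \<xi>) * cis (2 * pi * ((z - x) \<bullet> \<xi>)))"
        by (rule integrable_mult_bounded[where B=1]) (auto intro: gint)
      then show ?thesis unfolding H_def by simp
    qed
    have Hnorm: "norm (H x \<xi>) = norm (f x) * gk t \<xi>" for x \<xi>
      using gk_pos[of t \<xi>] by (simp add: H_def norm_mult)
    have Hint: "integrable (lborel \<Otimes>\<^sub>M lborel) (\<lambda>(x, \<xi>). H x \<xi>)"
    proof (rule lborel_pair.Fubini_integrable)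
      show "integrable lborel (\<lambda>x. \<integral>\<xi>. norm (case (x, \<xi>) of (x, \<xi>) \<Rightarrow> H x \<xi>) \<partial>lborel)"
        by (simp add: Hnorm f_int gint)
      show "AE x in lborel. integrable lborel (\<lambda>\<xi>. case (x, \<xi>) of (x, \<xi>) \<Rightarrow> H x \<xi>)"
        by (simp add: Hint_inner)
    qed (rule Hm)
    have "I t = (\<integral>\<xi>. (\<integral>x. H x \<xi> \<partial>lborel) \<partial>lborel)"
      unfolding I_def
    proof (rule Bochner_Integration.integral_cong[OF refl])
      fix \<xi> :: 'a
      have "ft f \<xi> * cis (2 * pi * (z \<bullet> \<xi>)) * gk t \<xi>
          = (\<integral>x. f x * cis (- 2 * pi * (x \<bullet> \<xi>)) \<partial>lborel) * (cis (2 * pi * (z \<bullet> \<xi>)) * gk t \<xi>)"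
        by (simp add: ft_def mult_ac)
      also have "\<dots> = (\<integral>x. f x * cis (- 2 * pi * (x \<bullet> \<xi>)) * (cis (2 * pi * (z \<bullet> \<xi>)) * gk t \<xi>) \<partial>lborel)"
        by simp
      also have "\<dots> = (\<integral>x. H x \<xi> \<partial>lborel)"
        by (rule Bochner_Integration.integral_cong[OF refl])
           (unfold H_def ft_f_cis_mult[symmetric], simp add: mult_ac)
      finally show "ft f \<xi> * cis (2 * pi * (z \<bullet> \<xi>)) * gk t \<xi> = (\<integral>x. H x \<xi> \<partial>lborel)" .
    qed
    also have "\<dots> = (\<integral>x. (\<integral>\<xi>. H x \<xi> \<partial>lborel) \<partial>lborel)"
      by (rule lborel_pair.Fubini_integral[OF Hint])
    also have "\<dots> = (\<integral>x. f x * complex_of_real (exp (- pi * (norm (z - x) / t)^2) / t ^ DIM('a)) \<partial>lborel)"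
    proof (rule Bochner_Integration.integral_cong[OF refl])
      fix x
      have "(\<integral>\<xi>. H x \<xi> \<partial>lborel) = f x * (\<integral>\<xi>. complex_of_real (exp (- pi * t^2 * (norm \<xi>)^2)) * cis (2 * pi * ((z - x) \<bullet> \<xi>)) \<partial>lborel)"
        unfolding H_def gk_def by simp
      also have "\<dots> = f x * complex_of_real (exp (- pi * (norm (z - x) / t)^2) / t ^ DIM('a))"
        by (simp only: gauss_ft[OF t])
      finally show "(\<integral>\<xi>. H x \<xi> \<partial>lborel) = f x * complex_of_real (exp (- pi * (norm (z - x) / t)^2) / t ^ DIM('a))" .
    qed
    also have "\<dots> = (\<bar>- t\<bar>^DIM('a)) *\<^sub>R (\<integral>v. f (z + (- t) *\<^sub>R v) * complex_of_real (exp (- pi * (norm (z - (z + (- t) *\<^sub>R v)) / t)^2) / t ^ DIM('a)) \<partial>lborel)"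
      by (rule lborel_integral_affine_euclid) (use t in auto)
    also have "\<dots> = J t"
    proof -
      have "(\<lambda>v. f (z + (- t) *\<^sub>R v) * complex_of_real (exp (- pi * (norm (z - (z + (- t) *\<^sub>R v)) / t)^2) / t ^ DIM('a)))
          = (\<lambda>v. complex_of_real (1 / t ^ DIM('a)) * (f (z + (- t) *\<^sub>R v) * exp (- pi * (norm v)^2)))"
        using t by (auto simp: fun_eq_iff)
      then show ?thesis using t unfolding J_def by (simp add: scaleR_conv_of_real)
    qed
    finally show ?thesis .
  qed
  define tn where "tn n = 1 / (real n + 1)" for n :: nat
  have tn_pos: "tn n > 0" for n by (simp add: tn_def)
  have tn_lim: "tn \<longlonglongrightarrow> 0"
    using LIMSEQ_inverse_real_of_nat unfolding tn_def by (simp add: inverse_eq_divide add.commute)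
  have I_lim: "(\<lambda>n. I (tn n)) \<longlonglongrightarrow> (\<integral>\<xi>. ft f \<xi> * cis (2 * pi * (z \<bullet> \<xi>)) \<partial>lborel)"
    unfolding I_def
  proof (rule integral_dominated_convergence[where w="\<lambda>\<xi>. norm (ft f \<xi>)"])
    show "integrable lborel (\<lambda>\<xi>. norm (ft f \<xi>))" using F_int by simp
    show "AE \<xi> in lborel. (\<lambda>n. ft f \<xi> * cis (2 * pi * (z \<bullet> \<xi>)) * gk (tn n) \<xi>) \<longlonglongrightarrow> ft f \<xi> * cis (2 * pi * (z \<bullet> \<xi>))"
    proof (rule AE_I2)
      fix \<xi> :: 'a
      have "(\<lambda>n. gk (tn n) \<xi>) \<longlonglongrightarrow> gk 0 \<xi>"
        unfolding gk_def by (intro tendsto_intros tn_lim)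
      then have "(\<lambda>n. complex_of_real (gk (tn n) \<xi>)) \<longlonglongrightarrow> complex_of_real (gk 0 \<xi>)" by (rule tendsto_of_real)
      then have "(\<lambda>n. complex_of_real (gk (tn n) \<xi>)) \<longlonglongrightarrow> 1" by (simp add: gk_def)
      then show "(\<lambda>n. ft f \<xi> * cis (2 * pi * (z \<bullet> \<xi>)) * gk (tn n) \<xi>) \<longlonglongrightarrow> ft f \<xi> * cis (2 * pi * (z \<bullet> \<xi>))"
        using tendsto_mult_left[of "\<lambda>n. complex_of_real (gk (tn n) \<xi>)" 1 sequentially "ft f \<xi> * cis (2 * pi * (z \<bullet> \<xi>))"] by simp
    qed
    show "\<And>n. AE \<xi> in lborel. norm (ft f \<xi> * cis (2 * pi * (z \<bullet> \<xi>)) * gk (tn n) \<xi>) \<le> norm (ft f \<xi>)"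
    proof (intro AE_I2)
      fix n and \<xi> :: 'a
      have "\<bar>gk (tn n) \<xi>\<bar> \<le> 1" using gk_le1[of "tn n" \<xi>] gk_pos[of "tn n" \<xi>] tn_pos[of n] by simp
      then show "norm (ft f \<xi> * cis (2 * pi * (z \<bullet> \<xi>)) * gk (tn n) \<xi>) \<le> norm (ft f \<xi>)"
        by (simp add: norm_mult mult_left_le)
    qed
  qed measurable
  have J_lim: "(\<lambda>n. J (tn n)) \<longlonglongrightarrow> f z"
  proof -
    have "(\<lambda>n. J (tn n)) \<longlonglongrightarrow> (\<integral>v. f z * exp (- pi * (norm (v::'a))^2) \<partial>lborel)"
      unfolding J_def
    proof (rule integral_dominated_convergence[where w="\<lambda>v::'a. B * exp (- pi * (norm v)^2)"
        and s="\<lambda>n v. f (z + (- tn n) *\<^sub>R v) * complex_of_real (exp (- pi * (norm v)^2))"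
        and f="\<lambda>v. f z * complex_of_real (exp (- pi * (norm v)^2))"])
      show "integrable lborel (\<lambda>v::'a. B * exp (- pi * (norm v)^2))"
        using integrable_gauss[of 1, where 'a='a] by simp
      show "AE v in lborel. (\<lambda>n. f (z + (- tn n) *\<^sub>R v) * exp (- pi * (norm v)^2)) \<longlonglongrightarrow> f z * exp (- pi * (norm v)^2)"
      proof (rule AE_I2)
        fix v :: 'a
        have "(\<lambda>n. z + (- tn n) *\<^sub>R v) \<longlonglongrightarrow> z + (- 0) *\<^sub>R v"
          by (intro tendsto_intros tn_lim)
        then have "(\<lambda>n. f (z + (- tn n) *\<^sub>R v)) \<longlonglongrightarrow> f z"
          using continuous_on_tendsto_compose[OF f_cont] by fastforce
        then show "(\<lambda>n. f (z + (- tn n) *\<^sub>R v) * exp (- pi * (norm v)^2)) \<longlonglongrightarrow> f z * exp (- pi * (norm v)^2)"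
          by (intro tendsto_intros)
      qed
      show "\<And>n. AE v in lborel. norm (f (z + (- tn n) *\<^sub>R v) * exp (- pi * (norm v)^2)) \<le> B * exp (- pi * (norm v)^2)"
        using f_bdd by (auto simp: norm_mult intro!: AE_I2 mult_right_mono)
    qed measurable
    also have "(\<integral>v. f z * exp (- pi * (norm (v::'a))^2) \<partial>lborel) = f z"
      using gauss_total[where 'a='a] by simp
    finally show ?thesis .
  qed
  have "(\<lambda>n. I (tn n)) \<longlonglongrightarrow> f z"
    using J_lim IJ tn_pos by simp
  then show ?thesis using I_lim LIMSEQ_unique by blast
qed



lemma cs_integral_infsum:
  fixes G :: "'a \<Rightarrow> 'b::{banach,second_countable_topology}"
  assumes z: "\<And>x. x \<notin> S \<Longrightarrow> G x = 0" and s: "(\<lambda>x. norm (G x)) summable_on S"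
  shows "integrable (count_space UNIV) G" "(\<integral>x. G x \<partial>count_space UNIV) = infsum G S"
proof -
  have a: "Infinite_Set_Sum.abs_summable_on G S" using s abs_summable_equivalent by blast
  have eq: "(\<lambda>x. indicator S x *\<^sub>R G x) = G" using z by (auto simp: fun_eq_iff indicator_def)
  show "integrable (count_space UNIV) G"
    using a unfolding abs_summable_on_altdef set_integrable_def eq .
  have "infsetsum G S = (\<integral>x. G x \<partial>count_space UNIV)"
    unfolding infsetsum_altdef set_lebesgue_integral_def eq ..
  then show "(\<integral>x. G x \<partial>count_space UNIV) = infsum G S"
    using infsetsum_infsum[OF a] by simp
qed

lemma cs_integrable_summable:
  fixes G :: "'a \<Rightarrow> 'b::{banach,second_countable_topology}"
  assumes z: "\<And>x. x \<notin> S \<Longrightarrow> G x = 0" and i: "integrable (count_space UNIV) G"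
  shows "(\<lambda>x. norm (G x)) summable_on S"
proof -
  have eq: "(\<lambda>x. indicator S x *\<^sub>R G x) = G" using z by (auto simp: fun_eq_iff indicator_def)
  have "Infinite_Set_Sum.abs_summable_on G S"
    unfolding abs_summable_on_altdef set_integrable_def eq by (rule i)
  then show ?thesis using abs_summable_equivalent by blast
qed

lemma countable_support_measurable:
  fixes c :: "'a::{t1_space, second_countable_topology} \<Rightarrow> 'b::topological_space"
  assumes cS: "countable S" and z: "\<And>x. x \<notin> S \<Longrightarrow> c x = z0"
  shows "c \<in> borel_measurable borel"
proof (rule borel_measurableI)
  fix U :: "'b set" assume "open U"
  have cnt: "A \<subseteq> S \<Longrightarrow> A \<in> sets borel" for A
    by (rule sets.countable) (auto intro: countable_subset[OF _ cS] simp: closed_singleton borel_closed)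
  show "c -` U \<inter> space borel \<in> sets borel"
  proof (cases "z0 \<in> U")
    case True
    have "c -` U = UNIV - (S - c -` U)" using z True by auto
    moreover have "S - c -` U \<in> sets borel" using cnt[of "S - c -` U"] by auto
    ultimately show ?thesis by (metis borel_comp space_borel Int_UNIV_right Compl_eq_Diff_UNIV)
  next
    case False
    have "c -` U = S \<inter> c -` U" using z False by auto
    then show ?thesis using cnt[of "S \<inter> c -` U"] by auto
  qed
qed

lemma separated_finite_bounded:
  fixes E :: "'a::euclidean_space set"
  assumes sep: "separated E" and bS: "bounded S"
  shows "finite (E \<inter> S)"
proof (rule ccontr)
  assume inf: "infinite (E \<inter> S)"
  obtain \<delta> where d: "\<delta> > 0" "\<And>x y. x \<in> E \<Longrightarrow> y \<in> E \<Longrightarrow> x \<noteq> y \<Longrightarrow> \<delta> \<le> dist x y"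
    using sep unfolding separated_def by blast
  have "compact (closure S)" using bS by (simp add: compact_closure)
  then obtain x where "x \<in> closure S" "x islimpt (E \<inter> S)"
    using inf unfolding compact_eq_Bolzano_Weierstrass
    by (metis closure_subset inf_le2 subset_trans)
  then obtain y1 where y1: "y1 \<in> E \<inter> S" "y1 \<noteq> x" "dist y1 x < \<delta>/2"
    using d(1) unfolding islimpt_approachable by (meson half_gt_zero)
  then have "0 < dist y1 x" by simp
  then obtain y2 where y2: "y2 \<in> E \<inter> S" "y2 \<noteq> x" "dist y2 x < min (\<delta>/2) (dist y1 x)"
    using d(1) \<open>x islimpt _\<close> unfolding islimpt_approachable by (metis min_less_iff_conj half_gt_zero)
  have "y1 \<noteq> y2" using y2 by auto
  moreover have "dist y1 y2 < \<delta>" using y1 y2 dist_triangle_half_r[of x y1 \<delta> y2]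
    by (smt (verit) dist_commute dist_triangle)
  ultimately show False using d(2)[of y1 y2] y1 y2 by auto
qed

lemma separated_countable:
  fixes E :: "'a::euclidean_space set"
  assumes sep: "separated E"
  shows "countable E"
proof -
  have "E = (\<Union>n::nat. E \<inter> cball 0 (real n))"
    by (auto simp: real_arch_simple)
  moreover have "countable (\<Union>n::nat. E \<inter> cball 0 (real n))"
    by (intro countable_UN) (auto intro: countable_finite separated_finite_bounded[OF sep])
  ultimately show ?thesis by simp
qed



definition dm :: "('a::euclidean_space \<Rightarrow> complex) \<Rightarrow> 'a measure" where
  "dm c = distr (density (count_space UNIV) (\<lambda>x. ennreal (norm (c x)))) borel (\<lambda>x. x)"

definition dg :: "('a::euclidean_space \<Rightarrow> complex) \<Rightarrow> 'a \<Rightarrow> complex" where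
  "dg c x = c x / complex_of_real (norm (c x))"

lemma cnj_measurable[measurable]: "cnj \<in> borel_measurable borel"
  by (intro borel_measurable_continuous_onI continuous_intros)

lemma cnj_mult_self: "cnj z * z = complex_of_real (norm z) * complex_of_real (norm z)"
proof -
  have "cnj z * z = z * cnj z" by (rule mult.commute)
  also have "\<dots> = complex_of_real ((norm z)^2)" by (rule complex_norm_square[symmetric])
  finally show ?thesis by (simp add: power2_eq_square)
qed

lemma dg_norm: "norm (dg c x) \<le> 1"
  by (cases "c x = 0") (auto simp: dg_def norm_divide)

lemma dg_mult: "complex_of_real (norm (c x)) * dg c x = c x"
  by (cases "c x = 0") (auto simp: dg_def)

lemma sets_dm[simp]: "sets (dm c) = sets borel"
  by (simp add: dm_def)

lemma space_dm[simp]: "space (dm c) = UNIV"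
  by (simp add: dm_def)

lemma summable_norm_bound:
  fixes c :: "'a \<Rightarrow> complex"
  assumes s: "(\<lambda>x. norm (c x)) summable_on S" and F: "\<And>x. norm (F x) \<le> C"
  shows "(\<lambda>x. norm (F x * c x)) summable_on S"
proof -
  have C0: "0 \<le> C" using F[of undefined] norm_ge_zero order_trans by blast
  have "(\<lambda>x. C * norm (c x)) summable_on S" using s by (rule summable_on_cmult_right)
  then show ?thesis
    by (rule summable_on_comparison_test) (auto simp: norm_mult intro!: mult_right_mono F)
qed

locale discr =
  fixes c :: "'a::euclidean_space \<Rightarrow> complex" and S :: "'a set"
  assumes cS: "countable S" and z: "\<And>x. x \<notin> S \<Longrightarrow> c x = 0"
    and s: "(\<lambda>x. norm (c x)) summable_on S"
begin

lemma c_meas[measurable]: "c \<in> borel_measurable borel"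
  by (rule countable_support_measurable[OF cS z])

lemma dg_meas[measurable]: "dg c \<in> borel_measurable borel"
  unfolding dg_def by measurable

lemma id_meas: "(\<lambda>x. x) \<in> measurable (density (count_space UNIV) (\<lambda>x. ennreal (norm (c x)))) borel"
  by simp

lemma dm_integral:
  fixes F :: "'a \<Rightarrow> complex"
  assumes Fm: "F \<in> borel_measurable borel" and Fb: "\<And>x. norm (F x) \<le> C"
  shows "integrable (dm c) (\<lambda>x. F x * dg c x)"
    and "(\<integral>x. F x * dg c x \<partial>dm c) = infsum (\<lambda>x. F x * c x) S"
proof -
  have Gm: "(\<lambda>x. F x * dg c x) \<in> borel_measurable borel" using Fm by measurable
  have eq: "(\<lambda>x. norm (c x) *\<^sub>R (F x * dg c x)) = (\<lambda>x. F x * c x)"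
    using dg_mult by (auto simp: fun_eq_iff scaleR_conv_of_real mult_ac)
  have zz: "\<And>x. x \<notin> S \<Longrightarrow> F x * c x = 0" using z by simp
  have ss: "(\<lambda>x. norm (F x * c x)) summable_on S" by (rule summable_norm_bound[OF s Fb])
  show "integrable (dm c) (\<lambda>x. F x * dg c x)"
    unfolding dm_def
    apply (subst integrable_distr_eq[OF id_meas Gm])
    apply (subst integrable_density)
    using cs_integral_infsum(1)[OF zz ss] by (auto simp: eq)
  have "(\<integral>x. F x * dg c x \<partial>dm c) = (\<integral>x. F x * dg c x \<partial>density (count_space UNIV) (\<lambda>x. ennreal (norm (c x))))"
    unfolding dm_def by (rule integral_distr[OF id_meas Gm])
  also have "\<dots> = (\<integral>x. norm (c x) *\<^sub>R (F x * dg c x) \<partial>count_space UNIV)"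
    by (rule integral_density) auto
  also have "\<dots> = infsum (\<lambda>x. F x * c x) S"
    unfolding eq by (rule cs_integral_infsum(2)[OF zz ss])
  finally show "(\<integral>x. F x * dg c x \<partial>dm c) = infsum (\<lambda>x. F x * c x) S" .
qed

lemma dm_finite: "finite_measure (dm c)"
proof
  have "integrable (count_space UNIV) (\<lambda>x. norm (c x))"
    by (rule cs_integral_infsum(1)) (use z s in auto)
  then have "(\<integral>\<^sup>+x. ennreal (norm (c x)) \<partial>count_space UNIV) < \<infinity>"
    unfolding integrable_iff_bounded by simp
  moreover have "emeasure (dm c) (space (dm c)) = (\<integral>\<^sup>+x. ennreal (norm (c x)) \<partial>count_space UNIV)"
    unfolding dm_def by (simp add: emeasure_distr emeasure_density)
  ultimately show "emeasure (dm c) (space (dm c)) \<noteq> \<infinity>" by simp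
qed

lemma dm_bcm: "bcm (dm c) (dg c)"
  unfolding bcm_def
proof (intro conjI)
  show "sets (dm c) = sets borel" by simp
  show "finite_measure (dm c)" by (rule dm_finite)
  show "integrable (dm c) (dg c)"
    using dm_integral(1)[of "\<lambda>_. 1" 1] by simp
qed

lemma dm_tvnorm: "tvnorm (dm c) (dg c) = infsum (\<lambda>x. norm (c x)) S"
proof -
  define F where "F x = cnj (dg c x)" for x
  have Fm: "F \<in> borel_measurable borel" unfolding F_def by measurable
  have Fb: "norm (F x) \<le> 1" for x using dg_norm[of c x] by (simp add: F_def)
  have 1: "F x * dg c x = complex_of_real (norm (dg c x))" for x
  proof (cases "c x = 0")
    case True then show ?thesis by (simp add: F_def dg_def)
  next
    case False
    then have n1: "norm (dg c x) = 1" by (simp add: dg_def norm_divide)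
    have "F x * dg c x = complex_of_real (norm (dg c x)) * complex_of_real (norm (dg c x))"
      unfolding F_def by (rule cnj_mult_self)
    then show ?thesis unfolding n1 by simp
  qed
  have 2: "F x * c x = complex_of_real (norm (c x))" for x
  proof (cases "c x = 0")
    case True then show ?thesis by (simp add: F_def dg_def)
  next
    case False
    have "F x * c x = (cnj (c x) * c x) / complex_of_real (norm (c x))"
      by (simp add: F_def dg_def)
    also have "\<dots> = complex_of_real (norm (c x)) * complex_of_real (norm (c x)) / complex_of_real (norm (c x))"
      by (simp only: cnj_mult_self)
    also have "\<dots> = complex_of_real (norm (c x))" using False by simp
    finally show ?thesis .
  qed
  have "complex_of_real (tvnorm (dm c) (dg c)) = (\<integral>x. complex_of_real (norm (dg c x)) \<partial>dm c)"
    unfolding tvnorm_def by simp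
  also have "\<dots> = (\<integral>x. F x * dg c x \<partial>dm c)" by (simp add: 1)
  also have "\<dots> = infsum (\<lambda>x. F x * c x) S" by (rule dm_integral(2)[OF Fm Fb])
  also have "\<dots> = infsum (\<lambda>x. complex_of_real (norm (c x))) S" by (simp add: 2)
  also have "\<dots> = complex_of_real (infsum (\<lambda>x. norm (c x)) S)"
  proof -
    have "((\<lambda>x. norm (c x)) has_sum infsum (\<lambda>x. norm (c x)) S) S" using s by (rule has_sum_infsum)
    then have "((\<lambda>x. complex_of_real (norm (c x))) has_sum complex_of_real (infsum (\<lambda>x. norm (c x)) S)) S"
      by (simp add: has_sum_of_real_iff)
    then show ?thesis by (rule infsumI)
  qed
  finally show ?thesis by simp
qed

lemma dm_ftm: "ftm (dm c) (dg c) \<gamma> = infsum (\<lambda>x. c x * cis (- 2 * pi * (x \<bullet> \<gamma>))) S"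
proof -
  have "ftm (dm c) (dg c) \<gamma> = (\<integral>x. cis (- 2 * pi * (x \<bullet> \<gamma>)) * dg c x \<partial>dm c)"
    unfolding ftm_def by (simp add: mult.commute)
  also have "\<dots> = infsum (\<lambda>x. cis (- 2 * pi * (x \<bullet> \<gamma>)) * c x) S"
    by (rule dm_integral(2)[where C=1]) auto
  finally show ?thesis by (simp add: mult.commute)
qed

lemma dm_supp: "S \<subseteq> E \<Longrightarrow> supp_in (dm c) (dg c) E"
  unfolding supp_in_def using z by (auto simp: dg_def intro!: AE_I2)

end



locale atomic =
  fixes N :: "'a::euclidean_space measure" and E :: "'a set"
  assumes sN: "sets N = sets borel" and fN: "finite_measure N" and cE: "countable E"
begin

definition w :: "'a \<Rightarrow> real" where "w x = indicator E x * measure N {x}"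

lemma w_nonneg: "w x \<ge> 0" by (simp add: w_def)

lemma E_sets: "E \<in> sets borel"
  by (rule sets.countable[OF _ cE]) (auto simp: closed_singleton borel_closed)

lemma meas_eq: "density N (\<lambda>x. ennreal (indicator E x)) = distr (density (count_space UNIV) (\<lambda>x. ennreal (w x))) borel (\<lambda>x. x)"
proof (rule measure_eqI)
  show "sets (density N (\<lambda>x. ennreal (indicator E x))) = sets (distr (density (count_space UNIV) (\<lambda>x. ennreal (w x))) borel (\<lambda>x. x))"
    using sN by simp
  fix A assume "A \<in> sets (density N (\<lambda>x. ennreal (indicator E x)))"
  then have A: "A \<in> sets borel" using sN by simp
  have EA: "E \<inter> A \<in> sets N" using A E_sets sN by auto
  have ind: "E \<in> sets N" using E_sets sN by auto
  have im: "(\<lambda>x. ennreal (indicator E x)) \<in> borel_measurable N"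
    using ind by (intro measurable_compose[OF borel_measurable_indicator measurable_ennreal]) 
  have "emeasure (density N (\<lambda>x. ennreal (indicator E x))) A = (\<integral>\<^sup>+x. ennreal (indicator E x) * indicator A x \<partial>N)"
    by (rule emeasure_density[OF im]) (use A sN in auto)
  also have "\<dots> = (\<integral>\<^sup>+x. indicator (E \<inter> A) x \<partial>N)"
    by (rule nn_integral_cong) (auto simp: indicator_def)
  also have "\<dots> = emeasure N (E \<inter> A)" using EA by simp
  also have "\<dots> = (\<integral>\<^sup>+x. emeasure N {x} \<partial>count_space (E \<inter> A))"
    by (rule emeasure_countable_singleton) (use sN cE in \<open>auto simp: closed_singleton borel_closed intro: countable_subset\<close>)
  also have "\<dots> = (\<integral>\<^sup>+x. emeasure N {x} * indicator (E \<inter> A) x \<partial>count_space UNIV)"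
    by (rule nn_integral_count_space_indicator) simp
  also have "\<dots> = (\<integral>\<^sup>+x. ennreal (w x) * indicator A x \<partial>count_space UNIV)"
  proof (rule nn_integral_cong)
    fix x
    show "emeasure N {x} * indicator (E \<inter> A) x = ennreal (w x) * indicator A x"
      using finite_measure.emeasure_eq_measure[OF fN, of "{x}"]
      by (auto simp: w_def indicator_def)
  qed
  also have "\<dots> = emeasure (density (count_space UNIV) (\<lambda>x. ennreal (w x))) A"
    by (rule emeasure_density[symmetric]) auto
  also have "\<dots> = emeasure (distr (density (count_space UNIV) (\<lambda>x. ennreal (w x))) borel (\<lambda>x. x)) A"
    using A by (simp add: emeasure_distr)
  finally show "emeasure (density N (\<lambda>x. ennreal (indicator E x))) A = emeasure (distr (density (count_space UNIV) (\<lambda>x. ennreal (w x))) borel (\<lambda>x. x)) A" .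
qed

lemma atomic_integral:
  fixes G :: "'a \<Rightarrow> 'b::{banach,second_countable_topology}"
  assumes Gm: "G \<in> borel_measurable borel" and Gi: "integrable N G"
    and Gz: "AE x in N. x \<notin> E \<longrightarrow> G x = 0"
  shows "(\<lambda>x. norm (w x *\<^sub>R G x)) summable_on E"
    and "(\<integral>x. G x \<partial>N) = infsum (\<lambda>x. w x *\<^sub>R G x) E"
proof -
  have GN[measurable]: "G \<in> borel_measurable N" using Gm by (simp add: measurable_cong_sets[OF sN refl])
  have ind: "E \<in> sets N" using E_sets sN by auto
  have indm: "(\<lambda>x. indicator E x :: real) \<in> borel_measurable N" using ind by simp
  have idm: "(\<lambda>x. x) \<in> measurable (density (count_space UNIV) (\<lambda>x. ennreal (w x))) borel" by simp
  have zz: "\<And>x. x \<notin> E \<Longrightarrow> w x *\<^sub>R G x = 0" by (simp add: w_def)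
  have "integrable N (\<lambda>x. indicator E x *\<^sub>R G x)"
    using Gi ind by (rule integrable_mult_indicator[rotated])
  then have "integrable (density N (\<lambda>x. ennreal (indicator E x))) G"
    by (subst integrable_density[OF GN indm]) auto
  then have "integrable (distr (density (count_space UNIV) (\<lambda>x. ennreal (w x))) borel (\<lambda>x. x)) G"
    unfolding meas_eq[symmetric] .
  then have "integrable (density (count_space UNIV) (\<lambda>x. ennreal (w x))) G"
    by (simp add: integrable_distr_eq[OF idm Gm])
  then have ci: "integrable (count_space UNIV) (\<lambda>x. w x *\<^sub>R G x)"
    by (subst (asm) integrable_density) (auto simp: w_nonneg)
  show ss: "(\<lambda>x. norm (w x *\<^sub>R G x)) summable_on E"
    by (rule cs_integrable_summable[OF zz ci])
  have "(\<integral>x. G x \<partial>N) = (\<integral>x. indicator E x *\<^sub>R G x \<partial>N)"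
  proof (rule integral_cong_AE)
    show "AE x in N. G x = indicator E x *\<^sub>R G x"
      using Gz by eventually_elim (auto simp: indicator_def)
  qed (use ind in auto)
  also have "\<dots> = (\<integral>x. G x \<partial>density N (\<lambda>x. ennreal (indicator E x)))"
    by (rule integral_density[symmetric]) (auto simp: ind indm)
  also have "\<dots> = (\<integral>x. G x \<partial>distr (density (count_space UNIV) (\<lambda>x. ennreal (w x))) borel (\<lambda>x. x))"
    unfolding meas_eq ..
  also have "\<dots> = (\<integral>x. G x \<partial>density (count_space UNIV) (\<lambda>x. ennreal (w x)))"
    by (rule integral_distr[OF idm Gm])
  also have "\<dots> = (\<integral>x. w x *\<^sub>R G x \<partial>count_space UNIV)"
    by (rule integral_density) (auto simp: w_nonneg)
  also have "\<dots> = infsum (\<lambda>x. w x *\<^sub>R G x) E"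
    by (rule cs_integral_infsum(2)[OF zz ss])
  finally show "(\<integral>x. G x \<partial>N) = infsum (\<lambda>x. w x *\<^sub>R G x) E" .
qed

end



lemma phase_id:
  fixes x w \<xi> \<gamma>0 :: "'a::euclidean_space"
  shows "cis (2 * pi * ((s *\<^sub>R (x - w)) \<bullet> \<xi>)) * cis (- 2 * pi * (x \<bullet> \<gamma>0))
    = cis (- 2 * pi * s * (w \<bullet> \<xi>)) * cis (- 2 * pi * (x \<bullet> (\<gamma>0 - s *\<^sub>R \<xi>)))"
proof -
  have "2 * pi * ((s *\<^sub>R (x - w)) \<bullet> \<xi>) + - 2 * pi * (x \<bullet> \<gamma>0)
      = - 2 * pi * s * (w \<bullet> \<xi>) + - 2 * pi * (x \<bullet> (\<gamma>0 - s *\<^sub>R \<xi>))"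
    by (simp add: inner_diff_left inner_diff_right algebra_simps)
  then show ?thesis by (simp add: cis_mult)
qed

locale hctx =
  fixes h :: "'a::euclidean_space \<Rightarrow> complex" and Bh :: real
  assumes h_int: "integrable lborel h" and h_cont: "continuous_on UNIV h"
    and h_bdd: "\<And>x. norm (h x) \<le> Bh" and H_int: "integrable lborel (ft h)"
begin

lemma h_inv: "h z = (\<integral>\<xi>. ft h \<xi> * cis (2 * pi * (z \<bullet> \<xi>)) \<partial>lborel)"
  by (rule fourier_inversion[OF h_int h_cont h_bdd H_int])

lemma h_meas[measurable]: "h \<in> borel_measurable borel" using h_int by auto
lemma H_meas[measurable]: "ft h \<in> borel_measurable borel" using H_int by auto

lemma key:
  assumes NK: "bcm N k"
  shows "(\<integral>x. h (s *\<^sub>R (x - w)) * cis (- 2 * pi * (x \<bullet> \<gamma>0)) * k x \<partial>N)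
       = (\<integral>\<xi>. ft h \<xi> * cis (- 2 * pi * s * (w \<bullet> \<xi>)) * ftm N k (\<gamma>0 - s *\<^sub>R \<xi>) \<partial>lborel)"
proof -
  have sN: "sets N = sets borel" and fN: "finite_measure N" and ki: "integrable N k"
    using NK by (auto simp: bcm_def)
  interpret N: finite_measure N by (rule fN)
  interpret P: pair_sigma_finite N lborel ..
  have km[measurable]: "k \<in> borel_measurable N" using ki by auto
  have cong: "measurable N = measurable borel" by (rule measurable_cong_sets[OF sN refl, THEN ext])
  define Q where "Q x \<xi> = ft h \<xi> * cis (- 2 * pi * s * (w \<bullet> \<xi>)) * (k x * cis (- 2 * pi * (x \<bullet> (\<gamma>0 - s *\<^sub>R \<xi>))))" for x \<xi>
  have Qm: "(\<lambda>(x, \<xi>). Q x \<xi>) \<in> borel_measurable (N \<Otimes>\<^sub>M lborel)"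
  proof -
    have m1: "(\<lambda>p::'a\<times>'a. fst p) \<in> measurable (N \<Otimes>\<^sub>M lborel) borel"
    proof -
      have f: "fst \<in> measurable (N \<Otimes>\<^sub>M lborel) N" by (rule measurable_fst)
      have e: "measurable (N \<Otimes>\<^sub>M lborel) N = measurable (N \<Otimes>\<^sub>M lborel) borel"
        by (rule measurable_cong_sets[OF refl sN])
      from f show ?thesis unfolding e .
    qed
    have "(\<lambda>p::'a\<times>'a. k (fst p)) \<in> borel_measurable (N \<Otimes>\<^sub>M lborel)" by measurable
    then show ?thesis unfolding Q_def using m1 by (simp add: case_prod_beta) measurable
  qed
  have Qn: "norm (Q x \<xi>) = norm (ft h \<xi>) * norm (k x)" for x \<xi> by (simp add: Q_def norm_mult)
  have Qint: "integrable (N \<Otimes>\<^sub>M lborel) (\<lambda>(x, \<xi>). Q x \<xi>)"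
  proof (rule P.Fubini_integrable[OF Qm])
    show "integrable N (\<lambda>x. \<integral>\<xi>. norm (case (x, \<xi>) of (x, \<xi>) \<Rightarrow> Q x \<xi>) \<partial>lborel)"
      using ki by (simp add: Qn)
    show "AE x in N. integrable lborel (\<lambda>\<xi>. case (x, \<xi>) of (x, \<xi>) \<Rightarrow> Q x \<xi>)"
    proof (rule AE_I2)
      fix x
      have "integrable lborel (\<lambda>\<xi>. ft h \<xi> * (cis (- 2 * pi * s * (w \<bullet> \<xi>)) * (k x * cis (- 2 * pi * (x \<bullet> (\<gamma>0 - s *\<^sub>R \<xi>))))))"
        by (rule integrable_mult_bounded[where B="norm (k x)"]) (auto simp: H_int norm_mult)
      then show "integrable lborel (\<lambda>\<xi>. case (x, \<xi>) of (x, \<xi>) \<Rightarrow> Q x \<xi>)"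
        by (simp add: Q_def mult_ac)
    qed
  qed
  have "(\<integral>x. h (s *\<^sub>R (x - w)) * cis (- 2 * pi * (x \<bullet> \<gamma>0)) * k x \<partial>N) = (\<integral>x. (\<integral>\<xi>. Q x \<xi> \<partial>lborel) \<partial>N)"
  proof (rule Bochner_Integration.integral_cong[OF refl])
    fix x
    have "h (s *\<^sub>R (x - w)) * cis (- 2 * pi * (x \<bullet> \<gamma>0)) * k x
        = (\<integral>\<xi>. ft h \<xi> * cis (2 * pi * ((s *\<^sub>R (x - w)) \<bullet> \<xi>)) \<partial>lborel) * (cis (- 2 * pi * (x \<bullet> \<gamma>0)) * k x)"
      by (subst h_inv) (simp add: mult_ac)
    also have "\<dots> = (\<integral>\<xi>. ft h \<xi> * cis (2 * pi * ((s *\<^sub>R (x - w)) \<bullet> \<xi>)) * (cis (- 2 * pi * (x \<bullet> \<gamma>0)) * k x) \<partial>lborel)"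
      by simp
    also have "\<dots> = (\<integral>\<xi>. Q x \<xi> \<partial>lborel)"
    proof (rule Bochner_Integration.integral_cong[OF refl])
      fix \<xi>
      have "ft h \<xi> * cis (2 * pi * ((s *\<^sub>R (x - w)) \<bullet> \<xi>)) * (cis (- 2 * pi * (x \<bullet> \<gamma>0)) * k x)
         = ft h \<xi> * (cis (2 * pi * ((s *\<^sub>R (x - w)) \<bullet> \<xi>)) * cis (- 2 * pi * (x \<bullet> \<gamma>0))) * k x"
        by (simp add: mult_ac)
      also have "\<dots> = Q x \<xi>" unfolding phase_id Q_def by (simp add: mult_ac)
      finally show "ft h \<xi> * cis (2 * pi * ((s *\<^sub>R (x - w)) \<bullet> \<xi>)) * (cis (- 2 * pi * (x \<bullet> \<gamma>0)) * k x) = Q x \<xi>" .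
    qed
    finally show "h (s *\<^sub>R (x - w)) * cis (- 2 * pi * (x \<bullet> \<gamma>0)) * k x = (\<integral>\<xi>. Q x \<xi> \<partial>lborel)" .
  qed
  also have "\<dots> = (\<integral>\<xi>. (\<integral>x. Q x \<xi> \<partial>N) \<partial>lborel)"
    by (rule P.Fubini_integral[OF Qint, symmetric])
  also have "\<dots> = (\<integral>\<xi>. ft h \<xi> * cis (- 2 * pi * s * (w \<bullet> \<xi>)) * ftm N k (\<gamma>0 - s *\<^sub>R \<xi>) \<partial>lborel)"
    unfolding Q_def ftm_def by simp
  finally show ?thesis .
qed

end



lemma infsum_dct:
  fixes c :: "'a \<Rightarrow> complex" and \<phi> :: "nat \<Rightarrow> 'a \<Rightarrow> complex"
  assumes z: "\<And>x. x \<notin> S \<Longrightarrow> c x = 0" and s: "(\<lambda>x. norm (c x)) summable_on S"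
    and bnd: "\<And>n x. norm (\<phi> n x) \<le> B" and lim: "\<And>x. x \<in> S \<Longrightarrow> (\<lambda>n. \<phi> n x) \<longlonglongrightarrow> \<phi>0 x"
  shows "(\<lambda>n. infsum (\<lambda>x. \<phi> n x * c x) S) \<longlonglongrightarrow> infsum (\<lambda>x. \<phi>0 x * c x) S"
proof -
  have B0: "0 \<le> B" using bnd[of 0 undefined] norm_ge_zero order_trans by blast
  have b0: "norm (\<phi>0 x) \<le> B" if "x \<in> S" for x
    using lim[OF that] bnd by (intro LIMSEQ_le_const2[OF tendsto_norm]) auto
  have Bs: "(\<lambda>x. B * norm (c x)) summable_on S" using s by (rule summable_on_cmult_right)
  have sn: "(\<lambda>x. norm (\<phi> n x * c x)) summable_on S" for n
    by (rule summable_norm_bound[OF s bnd])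
  have s0: "(\<lambda>x. norm (\<phi>0 x * c x)) summable_on S"
    by (rule summable_on_comparison_test[OF Bs]) (auto simp: norm_mult intro!: mult_right_mono b0)
  have zn: "\<And>x. x \<notin> S \<Longrightarrow> \<phi> n x * c x = 0" for n using z by simp
  have z0: "\<And>x. x \<notin> S \<Longrightarrow> \<phi>0 x * c x = 0" using z by simp
  have wi: "integrable (count_space UNIV) (\<lambda>x. B * norm (c x))"
    by (rule cs_integral_infsum(1)) (use z Bs B0 in auto)
  have "(\<lambda>n. \<integral>x. \<phi> n x * c x \<partial>count_space UNIV) \<longlonglongrightarrow> (\<integral>x. \<phi>0 x * c x \<partial>count_space UNIV)"
  proof (rule integral_dominated_convergence[where w="\<lambda>x. B * norm (c x)"])
    show "integrable (count_space UNIV) (\<lambda>x. B * norm (c x))" by (rule wi)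
    show "AE x in count_space UNIV. (\<lambda>n. \<phi> n x * c x) \<longlonglongrightarrow> \<phi>0 x * c x"
    proof (rule AE_I2)
      fix x show "(\<lambda>n. \<phi> n x * c x) \<longlonglongrightarrow> \<phi>0 x * c x"
        by (cases "x \<in> S") (auto simp: z intro!: tendsto_intros lim)
    qed
    show "\<And>n. AE x in count_space UNIV. norm (\<phi> n x * c x) \<le> B * norm (c x)"
      by (auto simp: norm_mult intro!: AE_I2 mult_right_mono bnd)
  qed auto
  moreover have "\<And>n. (\<integral>x. \<phi> n x * c x \<partial>count_space UNIV) = infsum (\<lambda>x. \<phi> n x * c x) S"
    by (rule cs_integral_infsum(2)[OF zn sn])
  moreover have "(\<integral>x. \<phi>0 x * c x \<partial>count_space UNIV) = infsum (\<lambda>x. \<phi>0 x * c x) S"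
    by (rule cs_integral_infsum(2)[OF z0 s0])
  ultimately show ?thesis by simp
qed

lemma diag_subseq:
  fixes f :: "nat \<Rightarrow> 'a \<Rightarrow> complex" and p :: "nat \<Rightarrow> 'a"
  assumes bdd: "\<And>n x. norm (f n x) \<le> M"
  shows "\<exists>d. strict_mono d \<and> (\<forall>m. convergent (\<lambda>k. f (d k) (p m)))"
proof -
  let ?P = "\<lambda>n. \<lambda>s. convergent (\<lambda>k. f (s k) (p n))"
  interpret nat: subseqs ?P
  proof (unfold convergent_def, unfold subseqs_def, auto)
    fix n :: nat and s :: "nat \<Rightarrow> nat" assume s: "strict_mono s"
    have "bounded (cball (0::complex) M)" by simp
    moreover have "\<And>k. f (s k) (p n) \<in> cball 0 M"
      using bdd by simp
    ultimately have "\<exists>l s'. strict_mono s' \<and> ((\<lambda>k. f (s k) (p n)) \<circ> s') \<longlonglongrightarrow> l"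
      using compact_cball compact_imp_seq_compact seq_compactE by metis
    thus "\<exists>s'. strict_mono (s'::nat\<Rightarrow>nat) \<and> (\<exists>l. (\<lambda>k. f (s (s' k)) (p n)) \<longlonglongrightarrow> l)"
      by (auto simp: comp_def)
  qed
  define d where "d = nat.diagseq"
  have subseq: "strict_mono d"
    unfolding d_def using nat.subseq_diagseq by auto
  have cnv: "?P n d" for n
  proof -
    have Pn_seqseq: "?P n (nat.seqseq (Suc n))"
      by (rule nat.seqseq_holds)
    have 1: "(\<lambda>k. f ((nat.seqseq (Suc n) \<circ> (\<lambda>k. nat.fold_reduce (Suc n) k
      (Suc n + k))) k) (p n)) = (\<lambda>k. f (nat.seqseq (Suc n) k) (p n)) \<circ>
      (\<lambda>k. nat.fold_reduce (Suc n) k (Suc n + k))"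
      by auto
    have 2: "?P n (d \<circ> ((+) (Suc n)))"
      unfolding d_def nat.diagseq_seqseq 1
      by (intro convergent_subseq_convergent Pn_seqseq nat.subseq_diagonal_rest)
    then obtain L where 3: "(\<lambda>na. f (d (na + Suc n)) (p n)) \<longlonglongrightarrow> L"
      by (auto simp: add.commute dest: convergentD)
    then have "(\<lambda>k. f (d k) (p n)) \<longlonglongrightarrow> L"
      by (rule LIMSEQ_offset)
    then show ?thesis
      by (auto simp: convergent_def)
  qed
  show ?thesis using subseq cnv by blast
qed



lemma infsum_diff':
  fixes f g :: "'a \<Rightarrow> 'b::{topological_ab_group_add,t2_space}"
  assumes "f summable_on A" "g summable_on A"
  shows "infsum (\<lambda>x. f x - g x) A = infsum f A - infsum g A"
proof -
  have "((\<lambda>x. - g x) has_sum (- infsum g A)) A"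
    using has_sum_infsum[OF assms(2)] by (simp add: has_sum_uminus)
  from has_sum_add[OF has_sum_infsum[OF assms(1)] this]
  show ?thesis by (intro infsumI) simp
qed

lemma abs_summable_summable':
  fixes f :: "'a \<Rightarrow> 'b::banach"
  shows "(\<lambda>x. norm (f x)) summable_on A \<Longrightarrow> f summable_on A"
  by (rule abs_summable_summable)

lemma c0_conv:
  fixes cn :: "nat \<Rightarrow> 'a \<Rightarrow> complex" and c \<phi> :: "'a \<Rightarrow> complex"
  assumes sn: "\<And>n. (\<lambda>x. norm (cn n x)) summable_on S" and Kn: "\<And>n. infsum (\<lambda>x. norm (cn n x)) S \<le> K"
    and sc: "(\<lambda>x. norm (c x)) summable_on S" and Kc: "infsum (\<lambda>x. norm (c x)) S \<le> K"
    and pw: "\<And>x. x \<in> S \<Longrightarrow> (\<lambda>n. cn n x) \<longlonglongrightarrow> c x"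
    and \<phi>b: "\<And>x. norm (\<phi> x) \<le> B" and c0: "\<And>\<eta>. \<eta> > 0 \<Longrightarrow> finite {x\<in>S. norm (\<phi> x) > \<eta>}"
  shows "(\<lambda>n. infsum (\<lambda>x. \<phi> x * cn n x) S) \<longlonglongrightarrow> infsum (\<lambda>x. \<phi> x * c x) S"
proof -
  have K0: "0 \<le> K" using Kc infsum_nonneg[of S "\<lambda>x. norm (c x)"] by simp
  define D where "D n x = \<phi> x * (cn n x - c x)" for n x
  have nDs: "(\<lambda>x. norm (D n x)) summable_on S" for n
  proof -
    have "(\<lambda>x. norm (\<phi> x * (cn n x - c x))) summable_on S"
    proof (rule summable_norm_bound[OF _ \<phi>b])
      show "(\<lambda>x. norm (cn n x - c x)) summable_on S"
        by (rule summable_on_comparison_test[OF summable_on_add[OF sn[of n] sc]]) (auto intro: norm_triangle_ineq4)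
    qed
    then show ?thesis unfolding D_def .
  qed
  have s1: "(\<lambda>x. \<phi> x * cn n x) summable_on S" for n
    by (rule abs_summable_summable'[OF summable_norm_bound[OF sn \<phi>b]])
  have s2: "(\<lambda>x. \<phi> x * c x) summable_on S"
    by (rule abs_summable_summable'[OF summable_norm_bound[OF sc \<phi>b]])
  have diff: "infsum (\<lambda>x. \<phi> x * cn n x) S - infsum (\<lambda>x. \<phi> x * c x) S = infsum (D n) S" for n
    unfolding D_def right_diff_distrib by (rule infsum_diff'[OF s1 s2, symmetric])
  have "(\<lambda>n. infsum (D n) S) \<longlonglongrightarrow> 0"
  proof (rule LIMSEQ_I)
    fix e :: real assume e: "e > 0"
    define \<eta> where "\<eta> = e / (4 * (K + 1))"
    have \<eta>: "\<eta> > 0" using e K0 by (simp add: \<eta>_def)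
    define F where "F = {x\<in>S. norm (\<phi> x) > \<eta>}"
    have fF: "finite F" unfolding F_def by (rule c0[OF \<eta>])
    have FS: "F \<subseteq> S" by (auto simp: F_def)
    have tail: "norm (infsum (D n) (S - F)) \<le> e / 2" for n
    proof -
      have nDs': "(\<lambda>x. norm (D n x)) summable_on (S - F)"
        by (rule summable_on_subset_banach[OF nDs]) auto
      have "norm (infsum (D n) (S - F)) \<le> infsum (\<lambda>x. norm (D n x)) (S - F)"
        by (rule norm_infsum_bound[OF nDs'])
      also have "\<dots> \<le> infsum (\<lambda>x. \<eta> * (norm (cn n x) + norm (c x))) (S - F)"
      proof (rule infsum_mono[OF nDs'])
        show "(\<lambda>x. \<eta> * (norm (cn n x) + norm (c x))) summable_on (S - F)"
          by (intro summable_on_cmult_right summable_on_subset_banach[OF summable_on_add[OF sn[of n] sc]]) auto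
        fix x assume x: "x \<in> S - F"
        then have "norm (\<phi> x) \<le> \<eta>" by (auto simp: F_def)
        moreover have "norm (cn n x - c x) \<le> norm (cn n x) + norm (c x)" by (rule norm_triangle_ineq4)
        ultimately show "norm (D n x) \<le> \<eta> * (norm (cn n x) + norm (c x))"
          unfolding D_def norm_mult using \<eta> by (intro mult_mono) auto
      qed
      also have "\<dots> \<le> infsum (\<lambda>x. \<eta> * (norm (cn n x) + norm (c x))) S"
      proof (rule infsum_mono_neutral)
        show "(\<lambda>x. \<eta> * (norm (cn n x) + norm (c x))) summable_on (S - F)"
          by (intro summable_on_cmult_right summable_on_subset_banach[OF summable_on_add[OF sn[of n] sc]]) auto
        show "(\<lambda>x. \<eta> * (norm (cn n x) + norm (c x))) summable_on S"
          by (intro summable_on_cmult_right summable_on_add[OF sn[of n] sc])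
      qed (use \<eta> in auto)
      also have "\<dots> = \<eta> * (infsum (\<lambda>x. norm (cn n x)) S + infsum (\<lambda>x. norm (c x)) S)"
        by (subst infsum_cmult_right) (auto intro: summable_on_add[OF sn[of n] sc] simp: infsum_add[OF sn[of n] sc])
      also have "\<dots> \<le> \<eta> * (2 * K)" using Kn[of n] Kc \<eta> by (intro mult_left_mono) auto
      also have "\<dots> \<le> e / 2" using e K0 by (simp add: \<eta>_def field_simps)
      finally show ?thesis .
    qed
    have "(\<lambda>n. \<Sum>x\<in>F. D n x) \<longlonglongrightarrow> (\<Sum>x\<in>F. \<phi> x * (c x - c x))"
      unfolding D_def using FS by (intro tendsto_sum tendsto_intros pw) auto
    then have "(\<lambda>n. \<Sum>x\<in>F. D n x) \<longlonglongrightarrow> 0" by simp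
    then obtain N where N: "\<And>n. n \<ge> N \<Longrightarrow> norm (\<Sum>x\<in>F. D n x) < e / 2"
      using e by (metis LIMSEQ_D diff_zero half_gt_zero)
    show "\<exists>N. \<forall>n\<ge>N. norm (infsum (D n) S - 0) < e"
    proof (intro exI allI impI)
      fix n assume "n \<ge> N"
      have DsF: "D n summable_on F" using fF by simp
      have DsSF: "D n summable_on (S - F)"
        by (rule abs_summable_summable'[OF summable_on_subset_banach[OF nDs]]) auto
      have "infsum (D n) S = infsum (D n) (F \<union> (S - F))" using FS by (simp add: Un_absorb1 Un_Diff_cancel)
      also have "\<dots> = infsum (D n) F + infsum (D n) (S - F)"
        by (rule infsum_Un_disjoint[OF DsF DsSF]) auto
      also have "infsum (D n) F = (\<Sum>x\<in>F. D n x)" using fF by simp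
      finally have "norm (infsum (D n) S) \<le> norm (\<Sum>x\<in>F. D n x) + norm (infsum (D n) (S - F))"
        by (simp add: norm_triangle_ineq)
      also have "\<dots> < e / 2 + e / 2" using N[OF \<open>n \<ge> N\<close>] tail[of n] by linarith
      finally show "norm (infsum (D n) S - 0) < e" by simp
    qed
  qed
  then have "(\<lambda>n. infsum (\<lambda>x. \<phi> x * cn n x) S - infsum (\<lambda>x. \<phi> x * c x) S) \<longlonglongrightarrow> 0"
    by (simp add: diff)
  then show ?thesis using Lim_null by (metis (no_types) tendsto_add_const_iff diff_add_cancel add_0) 
qed



lemma h_props:
  fixes h :: "'a::euclidean_space \<Rightarrow> complex" and \<Omega> :: "real \<Rightarrow> real"
  assumes Om_inf: "filterlim \<Omega> at_top at_top"
    and h_int: "integrable lborel h" and h_cont: "continuous_on UNIV h"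
    and h_supp: "\<forall>\<gamma>. norm \<gamma> > \<epsilon> \<longrightarrow> ft h \<gamma> = 0"
    and h_decay: "\<exists>C R. \<forall>x. norm x \<ge> R \<longrightarrow> cmod (h x) \<le> C * exp (- \<Omega> (norm x))"
  shows "\<And>\<eta>. \<eta> > 0 \<Longrightarrow> \<exists>R. \<forall>x. norm x \<ge> R \<longrightarrow> norm (h x) \<le> \<eta>"
    and "\<exists>Bh. \<forall>x. norm (h x) \<le> Bh"
    and "integrable lborel (ft h)"
proof -
  obtain C R0 where CR: "\<And>x. norm x \<ge> R0 \<Longrightarrow> cmod (h x) \<le> C * exp (- \<Omega> (norm x))"
    using h_decay by blast
  show c0: "\<exists>R. \<forall>x. norm x \<ge> R \<longrightarrow> norm (h x) \<le> \<eta>" if \<eta>: "\<eta> > 0" for \<eta>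
  proof (cases "C \<le> 0")
    case True
    have "norm (h x) \<le> \<eta>" if "norm x \<ge> R0" for x
    proof -
      have "C * exp (- \<Omega> (norm x)) \<le> 0" using True by (simp add: mult_nonpos_nonneg)
      then show ?thesis using CR[OF that] \<eta> by linarith
    qed
    then show ?thesis by blast
  next
    case False
    then have C: "C > 0" by simp
    have "eventually (\<lambda>r. ln (C / \<eta>) \<le> \<Omega> r) at_top"
      using Om_inf by (simp add: filterlim_at_top)
    then obtain R1 where R1: "\<And>r. r \<ge> R1 \<Longrightarrow> ln (C / \<eta>) \<le> \<Omega> r"
      by (auto simp: eventually_at_top_linorder)
    have "norm (h x) \<le> \<eta>" if x: "norm x \<ge> max R0 R1" for x
    proof -
      have "C * exp (- \<Omega> (norm x)) \<le> C * exp (- ln (C / \<eta>))"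
        using R1[of "norm x"] x C by (intro mult_left_mono) auto
      also have "\<dots> = \<eta>" using C \<eta> by (simp add: exp_minus exp_ln)
      finally show ?thesis using CR[of x] x by simp
    qed
    then show ?thesis by blast
  qed
  obtain R where R: "\<And>x. norm x \<ge> R \<Longrightarrow> norm (h x) \<le> 1" using c0[of 1] by auto
  have "bounded (h ` cball 0 R)"
    by (intro compact_imp_bounded compact_continuous_image continuous_on_subset[OF h_cont]) auto
  then obtain B1 where B1: "\<And>x. x \<in> cball 0 R \<Longrightarrow> norm (h x) \<le> B1"
    unfolding bounded_iff by blast
  show "\<exists>Bh. \<forall>x. norm (h x) \<le> Bh"
  proof (intro exI allI)
    fix x show "norm (h x) \<le> max 1 B1"
      using R[of x] B1[of x] by (cases "norm x \<ge> R") (auto simp: dist_norm)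
  qed
  have hm[measurable]: "h \<in> borel_measurable borel" using h_int by auto
  have Hm: "ft h \<in> borel_measurable borel" unfolding ft_def by measurable
  define L where "L = (\<integral>x. norm (h x) \<partial>lborel)"
  have Hb: "norm (ft h \<xi>) \<le> L * indicator (cball 0 \<epsilon>) \<xi>" for \<xi>
  proof (cases "norm \<xi> \<le> \<epsilon>")
    case True
    have "norm (ft h \<xi>) \<le> (\<integral>x. norm (h x * cis (- 2 * pi * (x \<bullet> \<xi>))) \<partial>lborel)"
      unfolding ft_def by (rule integral_norm_bound)
    also have "\<dots> = L" by (simp add: L_def norm_mult)
    finally show ?thesis using True by (simp add: indicator_def)
  next
    case False then show ?thesis using h_supp by (auto simp: indicator_def)
  qed
  have ii: "integrable lborel (\<lambda>\<xi>::'a. L * indicator (cball 0 \<epsilon>) \<xi>)"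
    using emeasure_bounded_finite[OF bounded_cball[of "0::'a" \<epsilon>]]
    by (intro integrable_mult_right) (simp add: integrable_indicator_iff top.not_eq_extremum)
  have Hm': "ft h \<in> borel_measurable lborel" using Hm by simp
  show "integrable lborel (ft h)"
  proof (rule Bochner_Integration.integrable_bound[OF ii Hm'], rule AE_I2)
    fix \<xi> :: 'a
    have L0: "L \<ge> 0" unfolding L_def by (rule integral_nonneg_AE) auto
    have "norm (L * indicator (cball 0 \<epsilon>) \<xi>) = L * indicator (cball 0 \<epsilon>) \<xi>"
      using L0 by (simp add: indicator_def)
    then show "norm (ft h \<xi>) \<le> norm (L * indicator (cball 0 \<epsilon>) \<xi>)" using Hb[of \<xi>] by simp
  qed
qed

lemma test_fun_props:
  fixes \<psi> :: "'a::euclidean_space \<Rightarrow> complex"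
  assumes "test_fun \<psi>"
  shows "continuous_on UNIV \<psi>" and "\<exists>B. \<forall>x. norm (\<psi> x) \<le> B" and "integrable lborel \<psi>"
    and "\<And>x. x \<notin> tsupport \<psi> \<Longrightarrow> \<psi> x = 0"
proof -
  have sm: "smooth_fun \<psi>" and K: "compact (tsupport \<psi>)" using assms by (auto simp: test_fun_def)
  have "\<forall>vs. set vs \<subseteq> Basis \<longrightarrow> continuous_on UNIV (foldr dpart vs \<psi>)"
    using sm unfolding smooth_fun_def by blast
  then have "set ([]::'a list) \<subseteq> Basis \<longrightarrow> continuous_on UNIV (foldr dpart ([]::'a list) \<psi>)" by blast
  then show cont: "continuous_on UNIV \<psi>" by simp
  show z: "\<psi> x = 0" if "x \<notin> tsupport \<psi>" for x
  proof (rule ccontr)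
    assume "\<psi> x \<noteq> 0"
    then have "x \<in> {x. \<psi> x \<noteq> 0}" by simp
    then have "x \<in> tsupport \<psi>" unfolding tsupport_def by (rule closure_subset[THEN subsetD])
    then show False using that by simp
  qed
  have "bounded (\<psi> ` tsupport \<psi>)"
    by (intro compact_imp_bounded compact_continuous_image continuous_on_subset[OF cont] K subset_UNIV)
  then obtain B where B: "\<And>x. x \<in> tsupport \<psi> \<Longrightarrow> norm (\<psi> x) \<le> B" unfolding bounded_iff by blast
  show "\<exists>B. \<forall>x. norm (\<psi> x) \<le> B"
  proof (intro exI allI)
    fix x show "norm (\<psi> x) \<le> max B 0"
    proof (cases "x \<in> tsupport \<psi>")
      case True then show ?thesis using B[of x] by simp
    next
      case False then show ?thesis using z[of x] by simp
    qed
  qed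
  have "integrable lborel (\<lambda>x. indicator (tsupport \<psi>) x *\<^sub>R \<psi> x)"
    by (rule borel_integrable_compact[OF K continuous_on_subset[OF cont subset_UNIV]])
  also have "(\<lambda>x. indicator (tsupport \<psi>) x *\<^sub>R \<psi> x) = \<psi>"
  proof
    fix x show "indicator (tsupport \<psi>) x *\<^sub>R \<psi> x = \<psi> x"
      using z[of x] by (cases "x \<in> tsupport \<psi>") simp_all
  qed
  finally show "integrable lborel \<psi>" .
qed

lemma cis_Cspec:
  fixes \<Lambda> :: "'a::euclidean_space set"
  assumes g: "\<gamma> \<in> \<Lambda>"
  shows "(\<lambda>x. cis (2 * pi * (x \<bullet> \<gamma>))) \<in> Cspec \<Lambda>"
  unfolding Cspec_def
proof (intro CollectI conjI)
  show "continuous_on UNIV (\<lambda>x. cis (2 * pi * (x \<bullet> \<gamma>)))" by (intro continuous_intros)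
  show "bounded (range (\<lambda>x. cis (2 * pi * (x \<bullet> \<gamma>))))"
    unfolding bounded_iff by (intro exI[of _ 1]) auto
  show "fsupp_in (\<lambda>x. cis (2 * pi * (x \<bullet> \<gamma>))) \<Lambda>"
    unfolding fsupp_in_def
  proof (intro allI impI)
    fix \<psi> :: "'a \<Rightarrow> complex" assume a: "test_fun \<psi> \<and> tsupport \<psi> \<inter> \<Lambda> = {}"
    then have tf: "test_fun \<psi>" and dis: "tsupport \<psi> \<inter> \<Lambda> = {}" by auto
    obtain B where B: "\<And>x. norm (\<psi> x) \<le> B" using test_fun_props(2)[OF tf] by blast
    have \<psi>0: "\<psi> \<gamma> = 0" using test_fun_props(4)[OF tf] dis g by blast
    show "(\<integral>x. cis (2 * pi * (x \<bullet> \<gamma>)) * ft \<psi> x \<partial>lborel) = 0"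
    proof (cases "integrable lborel (ft \<psi>)")
      case True
      have "\<psi> \<gamma> = (\<integral>\<xi>. ft \<psi> \<xi> * cis (2 * pi * (\<gamma> \<bullet> \<xi>)) \<partial>lborel)"
        by (rule fourier_inversion[OF test_fun_props(3)[OF tf] test_fun_props(1)[OF tf] B True])
      also have "\<dots> = (\<integral>x. cis (2 * pi * (x \<bullet> \<gamma>)) * ft \<psi> x \<partial>lborel)"
        by (simp add: inner_commute mult.commute)
      finally show ?thesis using \<psi>0 by simp
    next
      case False
      have "\<not> integrable lborel (\<lambda>x. cis (2 * pi * (x \<bullet> \<gamma>)) * ft \<psi> x)"
      proof
        assume "integrable lborel (\<lambda>x. cis (2 * pi * (x \<bullet> \<gamma>)) * ft \<psi> x)"
        then have "integrable lborel (\<lambda>x. cis (2 * pi * (x \<bullet> \<gamma>)) * ft \<psi> x * cis (- (2 * pi * (x \<bullet> \<gamma>))))"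
          by (rule integrable_mult_bounded[where B=1]) auto
        also have "(\<lambda>x. cis (2 * pi * (x \<bullet> \<gamma>)) * ft \<psi> x * cis (- (2 * pi * (x \<bullet> \<gamma>)))) = ft \<psi>"
          by (auto simp: fun_eq_iff cis_mult mult_ac)
        finally show False using False by simp
      qed
      then show ?thesis by (rule not_integrable_integral_eq)
    qed
  qed
qed

lemma dirac:
  fixes y :: "'a::euclidean_space"
  shows "bcm (return borel y) (\<lambda>_. 1)" and "tvnorm (return borel y) (\<lambda>_. 1) = 1"
    and "ftm (return borel y) (\<lambda>_. 1) \<gamma> = cis (- 2 * pi * (y \<bullet> \<gamma>))"
    and "\<And>F::'a \<Rightarrow> complex. F \<in> borel_measurable borel \<Longrightarrow> (\<integral>x. F x * 1 \<partial>return borel y) = F y"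
proof -
  interpret prob_space "return borel y" by (rule prob_space_return) simp
  show "bcm (return borel y) (\<lambda>_. 1)" unfolding bcm_def
    by (auto simp: finite_measure_axioms)
  show "tvnorm (return borel y) (\<lambda>_. 1) = 1" unfolding tvnorm_def
    by (subst integral_return) auto
  show "ftm (return borel y) (\<lambda>_. 1) \<gamma> = cis (- 2 * pi * (y \<bullet> \<gamma>))" unfolding ftm_def
    by (subst integral_return) auto
  show "\<And>F::'a \<Rightarrow> complex. F \<in> borel_measurable borel \<Longrightarrow> (\<integral>x. F x * 1 \<partial>return borel y) = F y"
    by (subst integral_return) auto
qed



locale setting = hctx h Bh
  for h :: "'a::euclidean_space \<Rightarrow> complex" and Bh +
  fixes \<Lambda> E :: "'a set" and \<epsilon> :: real and K0 :: real
  assumes eps: "\<epsilon> > 0"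
    and h_supp: "\<And>\<gamma>. norm \<gamma> > \<epsilon> \<Longrightarrow> ft h \<gamma> = 0"
    and h0: "h 0 = 1"
    and h_c0: "\<And>\<eta>. \<eta> > 0 \<Longrightarrow> \<exists>R. \<forall>x. norm x \<ge> R \<longrightarrow> norm (h x) \<le> \<eta>"
    and Lam_c: "compact \<Lambda>"
    and sep: "separated E"
    and Kb: "Kbal E (nbhd \<Lambda> \<epsilon>) = ereal K0"
begin

lemma transfer:
  assumes NK: "bcm N k"
    and eq: "\<And>\<xi>. norm \<xi> \<le> \<epsilon> \<Longrightarrow> ftm N k (\<gamma>0 - s *\<^sub>R \<xi>) = cis (- 2 * pi * (y \<bullet> (\<gamma>0 - s *\<^sub>R \<xi>)))"
  shows "(\<integral>x. h (s *\<^sub>R (x - w)) * cis (- 2 * pi * (x \<bullet> \<gamma>0)) * k x \<partial>N) = h (s *\<^sub>R (y - w)) * cis (- 2 * pi * (y \<bullet> \<gamma>0))"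
proof -
  have "(\<integral>x. h (s *\<^sub>R (x - w)) * cis (- 2 * pi * (x \<bullet> \<gamma>0)) * k x \<partial>N)
      = (\<integral>\<xi>. ft h \<xi> * cis (- 2 * pi * s * (w \<bullet> \<xi>)) * ftm N k (\<gamma>0 - s *\<^sub>R \<xi>) \<partial>lborel)"
    by (rule key[OF NK])
  also have "\<dots> = (\<integral>\<xi>. ft h \<xi> * cis (- 2 * pi * s * (w \<bullet> \<xi>)) * ftm (return borel y) (\<lambda>_. 1) (\<gamma>0 - s *\<^sub>R \<xi>) \<partial>lborel)"
  proof (rule Bochner_Integration.integral_cong[OF refl])
    fix \<xi> :: 'a
    show "ft h \<xi> * cis (- 2 * pi * s * (w \<bullet> \<xi>)) * ftm N k (\<gamma>0 - s *\<^sub>R \<xi>) =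
          ft h \<xi> * cis (- 2 * pi * s * (w \<bullet> \<xi>)) * ftm (return borel y) (\<lambda>_. 1) (\<gamma>0 - s *\<^sub>R \<xi>)"
    proof (cases "norm \<xi> \<le> \<epsilon>")
      case True then show ?thesis using eq[OF True] by (simp add: dirac(3))
    next
      case False then show ?thesis using h_supp[of \<xi>] by simp
    qed
  qed
  also have "\<dots> = (\<integral>x. h (s *\<^sub>R (x - w)) * cis (- 2 * pi * (x \<bullet> \<gamma>0)) * 1 \<partial>return borel y)"
    by (rule key[OF dirac(1), symmetric])
  also have "\<dots> = h (s *\<^sub>R (y - w)) * cis (- 2 * pi * (y \<bullet> \<gamma>0))"
    by (subst dirac(4)) auto
  finally show ?thesis .
qed

lemma cE: "countable E" by (rule separated_countable[OF sep])

lemma K0_nonneg: "K0 \<ge> 0"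
proof -
  have "ereal 0 \<le> Kbal E (nbhd \<Lambda> \<epsilon>)" unfolding Kbal_def by (rule Inf_greatest) (auto simp: zero_ereal_def)
  then show ?thesis using Kb by simp
qed

lemma bal_le: "bal_inf E (nbhd \<Lambda> \<epsilon>) (return borel y) (\<lambda>_. 1) \<le> ereal K0"
proof -
  have "bal_inf E (nbhd \<Lambda> \<epsilon>) (return borel y) (\<lambda>_. 1) \<le> Kbal E (nbhd \<Lambda> \<epsilon>)"
    unfolding Kbal_def
  proof (rule Inf_greatest)
    fix K assume "K \<in> {K. 0 \<le> K \<and> (\<forall>M g. bcm M g \<longrightarrow> bal_inf E (nbhd \<Lambda> \<epsilon>) M g \<le> K * ereal (tvnorm M g))}"
    then have "bal_inf E (nbhd \<Lambda> \<epsilon>) (return borel y) (\<lambda>_. 1) \<le> K * ereal (tvnorm (return borel y) (\<lambda>_. 1))"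
      using dirac(1)[of y] by blast
    then show "bal_inf E (nbhd \<Lambda> \<epsilon>) (return borel y) (\<lambda>_. 1) \<le> K" by (simp add: dirac(2))
  qed
  then show ?thesis using Kb by simp
qed

lemma approx_bal:
  "\<exists>N k. (N, k) \<in> Mb E \<and> (\<forall>\<gamma>\<in>nbhd \<Lambda> \<epsilon>. ftm N k \<gamma> = cis (- 2 * pi * (y \<bullet> \<gamma>)))
     \<and> tvnorm N k < K0 + 1 / (real n + 1)"
proof -
  have "bal_inf E (nbhd \<Lambda> \<epsilon>) (return borel y) (\<lambda>_. 1) < ereal (K0 + 1 / (real n + 1))"
    using bal_le[of y] by (rule le_less_trans) simp
  then obtain p where p: "p \<in> {(N, k)\<in>Mb E. \<forall>\<gamma>\<in>nbhd \<Lambda> \<epsilon>. ftm N k \<gamma> = ftm (return borel y) (\<lambda>_. 1) \<gamma>}"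
      and lt: "(case p of (N, k) \<Rightarrow> ereal (tvnorm N k)) < ereal (K0 + 1 / (real n + 1))"
    unfolding bal_inf_def INF_less_iff by blast
  obtain N k where pNk: "p = (N, k)" by (cases p)
  show ?thesis
    using p lt unfolding pNk by (intro exI[of _ N] exI[of _ k]) (auto simp: dirac(3))
qed

end



lemma coef:
  fixes N :: "'a::euclidean_space measure"
  assumes Mb: "(N, k) \<in> Mb E" and cE: "countable E"
  shows "\<exists>cn. (\<forall>x. x \<notin> E \<longrightarrow> cn x = 0) \<and> (\<lambda>x. norm (cn x)) summable_on E
     \<and> infsum (\<lambda>x. norm (cn x)) E = tvnorm N k
     \<and> (\<forall>F B. F \<in> borel_measurable borel \<longrightarrow> (\<forall>x. norm (F x) \<le> B) \<longrightarrow>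
            (\<integral>x. F x * k x \<partial>N) = infsum (\<lambda>x. F x * cn x) E)"
proof -
  have NK: "bcm N k" and sp: "supp_in N k E" using Mb by (auto simp: Mb_def)
  have sN: "sets N = sets borel" and fN: "finite_measure N" and ki: "integrable N k"
    using NK by (auto simp: bcm_def)
  interpret atomic N E by (rule atomic.intro[OF sN fN cE])
  have kmN: "k \<in> borel_measurable N" using ki by auto
  have km[measurable]: "k \<in> borel_measurable borel" using kmN by (simp add: measurable_cong_sets[OF sN refl])
  have AEz: "AE x in N. x \<notin> E \<longrightarrow> k x = 0" using sp by (simp add: supp_in_def)
  define cn where "cn x = complex_of_real (w x) * k x" for x
  have z: "\<forall>x. x \<notin> E \<longrightarrow> cn x = 0" by (simp add: cn_def w_def)
  have eq1: "w x *\<^sub>R norm (k x) = norm (cn x)" for x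
    using w_nonneg[of x] by (simp add: cn_def norm_mult)
  have i1: "integrable N (\<lambda>x. norm (k x))" using ki by simp
  have a1: "AE x in N. x \<notin> E \<longrightarrow> norm (k x) = 0" using AEz by simp
  have m1: "(\<lambda>x. norm (k x)) \<in> borel_measurable borel" by measurable
  have s1: "(\<lambda>x. norm (w x *\<^sub>R norm (k x))) summable_on E"
    by (rule atomic_integral(1)[OF m1 i1 a1])
  have eq2: "(\<lambda>x. norm (w x *\<^sub>R norm (k x))) = (\<lambda>x. norm (cn x))"
  proof
    fix x
    have "norm (w x *\<^sub>R norm (k x)) = w x *\<^sub>R norm (k x)" using w_nonneg[of x] by simp
    then show "norm (w x *\<^sub>R norm (k x)) = norm (cn x)" using eq1[of x] by simp
  qed
  have sE: "(\<lambda>x. norm (cn x)) summable_on E" using s1 unfolding eq2 .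
  have "tvnorm N k = infsum (\<lambda>x. w x *\<^sub>R norm (k x)) E"
    unfolding tvnorm_def by (rule atomic_integral(2)[OF m1 i1 a1])
  also have "\<dots> = infsum (\<lambda>x. norm (cn x)) E" by (rule infsum_cong) (rule eq1)
  finally have tv: "infsum (\<lambda>x. norm (cn x)) E = tvnorm N k" by simp
  have F: "(\<integral>x. F x * k x \<partial>N) = infsum (\<lambda>x. F x * cn x) E"
    if Fm: "F \<in> borel_measurable borel" and Fb: "\<forall>x. norm (F x) \<le> B" for F B
  proof -
    have FmN: "F \<in> borel_measurable N" using Fm by (simp add: measurable_cong_sets[OF sN refl])
    have "integrable N (\<lambda>x. k x * F x)"
      by (rule integrable_mult_bounded[OF ki FmN]) (use Fb in blast)
    then have iF: "integrable N (\<lambda>x. F x * k x)" by (simp add: mult.commute)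
    have aF: "AE x in N. x \<notin> E \<longrightarrow> F x * k x = 0" using AEz by eventually_elim simp
    have mF: "(\<lambda>x. F x * k x) \<in> borel_measurable borel" using Fm by measurable
    have "(\<integral>x. F x * k x \<partial>N) = infsum (\<lambda>x. w x *\<^sub>R (F x * k x)) E"
      by (rule atomic_integral(2)[OF mF iF aF])
    also have "\<dots> = infsum (\<lambda>x. F x * cn x) E"
      by (rule infsum_cong) (simp add: cn_def scaleR_conv_of_real mult.left_commute)
    finally show ?thesis .
  qed
  show ?thesis using z sE tv F by blast
qed



context setting
begin

lemma construct:
  "\<exists>c. (\<forall>x. x \<notin> E \<longrightarrow> c x = 0) \<and> (\<lambda>x. norm (c x)) summable_on E \<and> infsum (\<lambda>x. norm (c x)) E \<le> K0
     \<and> (\<forall>\<gamma>\<in>nbhd \<Lambda> \<epsilon>. infsum (\<lambda>x. c x * cis (- 2 * pi * (x \<bullet> \<gamma>))) E = cis (- 2 * pi * (y \<bullet> \<gamma>)))"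
proof -
  have "\<forall>n. \<exists>Nk. (fst Nk, snd Nk) \<in> Mb E \<and> (\<forall>\<gamma>\<in>nbhd \<Lambda> \<epsilon>. ftm (fst Nk) (snd Nk) \<gamma> = cis (- 2 * pi * (y \<bullet> \<gamma>)))
     \<and> tvnorm (fst Nk) (snd Nk) < K0 + 1 / (real n + 1)"
  proof
    fix n
    obtain N k where "(N, k) \<in> Mb E \<and> (\<forall>\<gamma>\<in>nbhd \<Lambda> \<epsilon>. ftm N k \<gamma> = cis (- 2 * pi * (y \<bullet> \<gamma>)))
     \<and> tvnorm N k < K0 + 1 / (real n + 1)" using approx_bal[of y n] by blast
    then show "\<exists>Nk. (fst Nk, snd Nk) \<in> Mb E \<and> (\<forall>\<gamma>\<in>nbhd \<Lambda> \<epsilon>. ftm (fst Nk) (snd Nk) \<gamma> = cis (- 2 * pi * (y \<bullet> \<gamma>)))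
     \<and> tvnorm (fst Nk) (snd Nk) < K0 + 1 / (real n + 1)" by (intro exI[of _ "(N, k)"]) simp
  qed
  from choice[OF this] obtain Nk where Nk: "\<And>n. (fst (Nk n), snd (Nk n)) \<in> Mb E"
    "\<And>n \<gamma>. \<gamma> \<in> nbhd \<Lambda> \<epsilon> \<Longrightarrow> ftm (fst (Nk n)) (snd (Nk n)) \<gamma> = cis (- 2 * pi * (y \<bullet> \<gamma>))"
    "\<And>n. tvnorm (fst (Nk n)) (snd (Nk n)) < K0 + 1 / (real n + 1)" by blast
  define NN where "NN n = fst (Nk n)" for n
  define KK where "KK n = snd (Nk n)" for n
  have NKb: "bcm (NN n) (KK n)" for n using Nk(1)[of n] by (cases "Nk n") (simp add: NN_def KK_def Mb_def)
  have "\<forall>n. \<exists>cn. (\<forall>x. x \<notin> E \<longrightarrow> cn x = 0) \<and> (\<lambda>x. norm (cn x)) summable_on E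
     \<and> infsum (\<lambda>x. norm (cn x)) E = tvnorm (NN n) (KK n)
     \<and> (\<forall>F B. F \<in> borel_measurable borel \<longrightarrow> (\<forall>x. norm (F x) \<le> B) \<longrightarrow>
            (\<integral>x. F x * KK n x \<partial>NN n) = infsum (\<lambda>x. F x * cn x) E)"
    using coef[OF Nk(1) cE] by (simp add: NN_def KK_def)
  from choice[OF this] obtain cc where
    cz: "\<And>n x. x \<notin> E \<Longrightarrow> cc n x = 0" and
    cs: "\<And>n. (\<lambda>x. norm (cc n x)) summable_on E" and
    ctv: "\<And>n. infsum (\<lambda>x. norm (cc n x)) E = tvnorm (NN n) (KK n)" and
    cF: "\<And>n F B. F \<in> borel_measurable borel \<Longrightarrow> (\<forall>x. norm (F x) \<le> B) \<Longrightarrow>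
            (\<integral>x. F x * KK n x \<partial>NN n) = infsum (\<lambda>x. F x * cc n x) E"
    by blast
  have ctv': "infsum (\<lambda>x. norm (cc n x)) E < K0 + 1 / (real n + 1)" for n
    using ctv[of n] Nk(3)[of n] by (simp add: NN_def KK_def)
  have ctv1: "infsum (\<lambda>x. norm (cc n x)) E \<le> K0 + 1" for n
  proof -
    have "1 / (real n + 1) \<le> 1" by simp
    then show ?thesis using ctv'[of n] by linarith
  qed
  have cb: "norm (cc n x) \<le> K0 + 1" for n x
  proof (cases "x \<in> E")
    case True
    have "sum (\<lambda>x. norm (cc n x)) {x} \<le> infsum (\<lambda>x. norm (cc n x)) E"
      by (rule finite_sum_le_infsum[OF cs]) (use True in auto)
    then show ?thesis using ctv1[of n] by simp
  next
    case False then show ?thesis using cz K0_nonneg by simp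
  qed
  obtain d where d: "strict_mono d" "\<And>m. convergent (\<lambda>j. cc (d j) (from_nat_into E m))"
    using diag_subseq[of cc "K0 + 1" "from_nat_into E"] cb by blast
  define c where "c x = (if x \<in> E then lim (\<lambda>j. cc (d j) x) else 0)" for x
  have cz0: "\<forall>x. x \<notin> E \<longrightarrow> c x = 0" by (simp add: c_def)
  have pw: "(\<lambda>j. cc (d j) x) \<longlonglongrightarrow> c x" if x: "x \<in> E" for x
  proof -
    obtain m where "from_nat_into E m = x" using from_nat_into_surj[OF cE x] by blast
    then have "convergent (\<lambda>j. cc (d j) x)" using d(2)[of m] by simp
    then show ?thesis using x by (simp add: c_def convergent_LIMSEQ_iff)
  qed
  have fin: "sum (\<lambda>x. norm (c x)) F \<le> K0" if F: "finite F" "F \<subseteq> E" for F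
  proof -
    have l1: "(\<lambda>j. sum (\<lambda>x. norm (cc (d j) x)) F) \<longlonglongrightarrow> sum (\<lambda>x. norm (c x)) F"
      using F by (intro tendsto_sum tendsto_norm pw) auto
    have l2: "(\<lambda>j. K0 + 1 / (real j + 1)) \<longlonglongrightarrow> K0"
      using tendsto_add[OF tendsto_const[of K0] LIMSEQ_inverse_real_of_nat]
      by (simp add: inverse_eq_divide add.commute)
    have le: "sum (\<lambda>x. norm (cc (d j) x)) F \<le> K0 + 1 / (real j + 1)" for j
    proof -
      have "sum (\<lambda>x. norm (cc (d j) x)) F \<le> infsum (\<lambda>x. norm (cc (d j) x)) E"
        by (rule finite_sum_le_infsum[OF cs]) (use F in auto)
      also have "\<dots> < K0 + 1 / (real (d j) + 1)" by (rule ctv')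
      also have "\<dots> \<le> K0 + 1 / (real j + 1)"
        using seq_suble[OF d(1), of j] by (simp add: frac_le)
      finally show ?thesis by simp
    qed
    show ?thesis by (rule LIMSEQ_le[OF l1 l2]) (use le in auto)
  qed
  have csum: "(\<lambda>x. norm (c x)) summable_on E"
  proof (rule nonneg_bdd_above_summable_on)
    show "bdd_above (sum (\<lambda>x. norm (c x)) ` {F. F \<subseteq> E \<and> finite F})"
      using fin by (intro bdd_aboveI[of _ K0]) auto
  qed auto
  have cK: "infsum (\<lambda>x. norm (c x)) E \<le> K0"
    by (rule infsum_le_finite_sums[OF csum fin])
  have cK1: "infsum (\<lambda>x. norm (c x)) E \<le> K0 + 1" using cK by simp
  have FT1: "infsum (\<lambda>x. c x * cis (- 2 * pi * (x \<bullet> \<gamma>0))) E = cis (- 2 * pi * (y \<bullet> \<gamma>0))"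
    if g0: "infdist \<gamma>0 \<Lambda> < \<epsilon>" for \<gamma>0
  proof -
    define \<rho> where "\<rho> = (\<epsilon> - infdist \<gamma>0 \<Lambda>) / \<epsilon>"
    have \<rho>: "\<rho> > 0" using g0 eps by (simp add: \<rho>_def)
    have at_s: "infsum (\<lambda>x. (h (s *\<^sub>R (x - 0)) * cis (- 2 * pi * (x \<bullet> \<gamma>0))) * c x) E
        = h (s *\<^sub>R (y - 0)) * cis (- 2 * pi * (y \<bullet> \<gamma>0))" if s: "0 < s" "s \<le> \<rho>" for s
    proof -
      define \<phi> where "\<phi> x = h (s *\<^sub>R (x - 0)) * cis (- 2 * pi * (x \<bullet> \<gamma>0))" for x
      have \<phi>m: "\<phi> \<in> borel_measurable borel" unfolding \<phi>_def by measurable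
      have \<phi>b: "\<forall>x. norm (\<phi> x) \<le> Bh" by (simp add: \<phi>_def norm_mult h_bdd)
      have each: "infsum (\<lambda>x. \<phi> x * cc n x) E = h (s *\<^sub>R (y - 0)) * cis (- 2 * pi * (y \<bullet> \<gamma>0))" for n
      proof -
        have "infsum (\<lambda>x. \<phi> x * cc n x) E = (\<integral>x. \<phi> x * KK n x \<partial>NN n)"
          by (rule cF[OF \<phi>m \<phi>b, symmetric])
        also have "\<dots> = h (s *\<^sub>R (y - 0)) * cis (- 2 * pi * (y \<bullet> \<gamma>0))"
          unfolding \<phi>_def
        proof (rule transfer[OF NKb])
          fix \<xi> :: 'a assume \<xi>: "norm \<xi> \<le> \<epsilon>"
          have "infdist (\<gamma>0 - s *\<^sub>R \<xi>) \<Lambda> \<le> infdist \<gamma>0 \<Lambda> + dist (\<gamma>0 - s *\<^sub>R \<xi>) \<gamma>0"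
            by (rule infdist_triangle)
          also have "dist (\<gamma>0 - s *\<^sub>R \<xi>) \<gamma>0 = s * norm \<xi>" using s by (simp add: dist_norm)
          also have "s * norm \<xi> \<le> \<rho> * \<epsilon>" using s \<xi> by (intro mult_mono) auto
          also have "\<rho> * \<epsilon> = \<epsilon> - infdist \<gamma>0 \<Lambda>" using eps by (simp add: \<rho>_def)
          finally have "\<gamma>0 - s *\<^sub>R \<xi> \<in> nbhd \<Lambda> \<epsilon>" by (simp add: nbhd_def)
          then show "ftm (NN n) (KK n) (\<gamma>0 - s *\<^sub>R \<xi>) = cis (- 2 * pi * (y \<bullet> (\<gamma>0 - s *\<^sub>R \<xi>)))"
            using Nk(2) by (simp add: NN_def KK_def)
        qed
        finally show ?thesis .
      qed
      have c0: "finite {x\<in>E. norm (\<phi> x) > \<eta>}" if \<eta>: "\<eta> > 0" for \<eta>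
      proof -
        obtain R where R: "\<And>x. norm x \<ge> R \<Longrightarrow> norm (h x) \<le> \<eta>" using h_c0[OF \<eta>] by blast
        have "{x\<in>E. norm (\<phi> x) > \<eta>} \<subseteq> E \<inter> cball 0 (R / s)"
        proof
          fix x assume x: "x \<in> {x\<in>E. norm (\<phi> x) > \<eta>}"
          have "norm x \<le> R / s"
          proof (rule ccontr)
            assume "\<not> norm x \<le> R / s"
            then have "R \<le> s * norm x" using s by (simp add: field_simps)
            then have "norm (h (s *\<^sub>R (x - 0))) \<le> \<eta>" using s by (intro R) simp
            then show False using x by (simp add: \<phi>_def norm_mult)
          qed
          then show "x \<in> E \<inter> cball 0 (R / s)" using x by auto
        qed
        moreover have "finite (E \<inter> cball 0 (R / s))" by (rule separated_finite_bounded[OF sep]) simp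
        ultimately show ?thesis by (rule finite_subset)
      qed
      have "(\<lambda>j. infsum (\<lambda>x. \<phi> x * cc (d j) x) E) \<longlonglongrightarrow> infsum (\<lambda>x. \<phi> x * c x) E"
        by (rule c0_conv[OF cs ctv1 csum cK1 pw]) (use \<phi>b c0 in auto)
      then have "(\<lambda>j. h (s *\<^sub>R (y - 0)) * cis (- 2 * pi * (y \<bullet> \<gamma>0))) \<longlonglongrightarrow> infsum (\<lambda>x. \<phi> x * c x) E"
        by (simp add: each)
      then show ?thesis unfolding \<phi>_def using LIMSEQ_unique tendsto_const by blast
    qed
    define sm where "sm m = \<rho> / (real m + 1)" for m :: nat
    have sm: "0 < sm m" "sm m \<le> \<rho>" for m using \<rho> by (auto simp: sm_def field_simps)
    have sm0: "sm \<longlonglongrightarrow> 0"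
    proof -
      have "(\<lambda>x. \<rho> / (1 + real x)) \<longlonglongrightarrow> 0"
        using tendsto_mult[OF tendsto_const[of \<rho>] LIMSEQ_inverse_real_of_nat]
        by (simp add: inverse_eq_divide)
      moreover have "sm = (\<lambda>x. \<rho> / (1 + real x))" by (simp add: sm_def fun_eq_iff add.commute)
      ultimately show ?thesis by simp
    qed
    have L1: "(\<lambda>m. infsum (\<lambda>x. (h (sm m *\<^sub>R (x - 0)) * cis (- 2 * pi * (x \<bullet> \<gamma>0))) * c x) E)
        \<longlonglongrightarrow> infsum (\<lambda>x. cis (- 2 * pi * (x \<bullet> \<gamma>0)) * c x) E"
    proof (rule infsum_dct[OF _ csum])
      show "\<And>x. x \<notin> E \<Longrightarrow> c x = 0" using cz0 by simp
      show "\<And>m x. norm (h (sm m *\<^sub>R (x - 0)) * cis (- 2 * pi * (x \<bullet> \<gamma>0))) \<le> Bh"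
        by (simp add: norm_mult h_bdd)
      fix x :: 'a
      have "(\<lambda>m. sm m *\<^sub>R (x - 0)) \<longlonglongrightarrow> 0 *\<^sub>R (x - 0)" by (intro tendsto_intros sm0)
      then have "(\<lambda>m. h (sm m *\<^sub>R (x - 0))) \<longlonglongrightarrow> h 0"
        using continuous_on_tendsto_compose[OF h_cont] by fastforce
      then show "(\<lambda>m. h (sm m *\<^sub>R (x - 0)) * cis (- 2 * pi * (x \<bullet> \<gamma>0))) \<longlonglongrightarrow> cis (- 2 * pi * (x \<bullet> \<gamma>0))"
        using tendsto_mult[OF _ tendsto_const] h0 by fastforce
    qed
    have L2: "(\<lambda>m. h (sm m *\<^sub>R (y - 0)) * cis (- 2 * pi * (y \<bullet> \<gamma>0))) \<longlonglongrightarrow> cis (- 2 * pi * (y \<bullet> \<gamma>0))"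
    proof -
      have "(\<lambda>m. sm m *\<^sub>R (y - 0)) \<longlonglongrightarrow> 0 *\<^sub>R (y - 0)" by (intro tendsto_intros sm0)
      then have "(\<lambda>m. h (sm m *\<^sub>R (y - 0))) \<longlonglongrightarrow> h 0"
        using continuous_on_tendsto_compose[OF h_cont] by fastforce
      then show ?thesis using tendsto_mult[OF _ tendsto_const] h0 by fastforce
    qed
    have "infsum (\<lambda>x. cis (- 2 * pi * (x \<bullet> \<gamma>0)) * c x) E = cis (- 2 * pi * (y \<bullet> \<gamma>0))"
      using L1 L2 at_s[OF sm] LIMSEQ_unique by simp
    then show ?thesis by (simp add: mult.commute)
  qed
  have FT: "infsum (\<lambda>x. c x * cis (- 2 * pi * (x \<bullet> \<gamma>0))) E = cis (- 2 * pi * (y \<bullet> \<gamma>0))"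
    if g0: "\<gamma>0 \<in> nbhd \<Lambda> \<epsilon>" for \<gamma>0
  proof (cases "infdist \<gamma>0 \<Lambda> < \<epsilon>")
    case True then show ?thesis by (rule FT1)
  next
    case False
    then have ieq: "infdist \<gamma>0 \<Lambda> = \<epsilon>" using g0 by (simp add: nbhd_def)
    have ne: "\<Lambda> \<noteq> {}" using ieq eps by (auto simp: infdist_def)
    obtain p where p: "p \<in> \<Lambda>" "infdist \<gamma>0 \<Lambda> = dist \<gamma>0 p"
      using infdist_attains_inf[OF compact_imp_closed[OF Lam_c] ne] by blast
    define gj where "gj j = \<gamma>0 + (1 / (real j + 2)) *\<^sub>R (p - \<gamma>0)" for j :: nat
    have gjl: "gj \<longlonglongrightarrow> \<gamma>0"
    proof -
      have "(\<lambda>j. 1 / (real j + 2)) \<longlonglongrightarrow> 0"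
        using LIMSEQ_Suc[OF LIMSEQ_inverse_real_of_nat]
        by (simp add: inverse_eq_divide add.commute)
      then have "(\<lambda>j. \<gamma>0 + (1 / (real j + 2)) *\<^sub>R (p - \<gamma>0)) \<longlonglongrightarrow> \<gamma>0 + 0 *\<^sub>R (p - \<gamma>0)"
        by (intro tendsto_intros)
      moreover have "gj = (\<lambda>j. \<gamma>0 + (1 / (real j + 2)) *\<^sub>R (p - \<gamma>0))" by (simp add: gj_def fun_eq_iff)
      ultimately show ?thesis by simp
    qed
    have gjin: "infdist (gj j) \<Lambda> < \<epsilon>" for j
    proof -
      have "infdist (gj j) \<Lambda> \<le> dist (gj j) p" by (rule infdist_le[OF p(1)])
      also have "gj j - p = (1 - 1 / (real j + 2)) *\<^sub>R (\<gamma>0 - p)"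
        by (simp add: gj_def algebra_simps)
      then have "dist (gj j) p = (1 - 1 / (real j + 2)) * dist \<gamma>0 p"
        by (simp add: dist_norm)
      also have "\<dots> < dist \<gamma>0 p" using ieq p(2) eps by (simp add: field_simps)
      finally show ?thesis using ieq p(2) by simp
    qed
    have L1: "(\<lambda>j. infsum (\<lambda>x. cis (- 2 * pi * (x \<bullet> gj j)) * c x) E) \<longlonglongrightarrow> infsum (\<lambda>x. cis (- 2 * pi * (x \<bullet> \<gamma>0)) * c x) E"
    proof (rule infsum_dct[OF _ csum])
      show "\<And>x. x \<notin> E \<Longrightarrow> c x = 0" using cz0 by simp
      show "\<And>j x. norm (cis (- 2 * pi * (x \<bullet> gj j))) \<le> 1" by simp
      fix x :: 'a show "(\<lambda>j. cis (- 2 * pi * (x \<bullet> gj j))) \<longlonglongrightarrow> cis (- 2 * pi * (x \<bullet> \<gamma>0))"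
        by (intro tendsto_intros gjl)
    qed
    have L2: "(\<lambda>j. cis (- 2 * pi * (y \<bullet> gj j))) \<longlonglongrightarrow> cis (- 2 * pi * (y \<bullet> \<gamma>0))"
      by (intro tendsto_intros gjl)
    have "infsum (\<lambda>x. cis (- 2 * pi * (x \<bullet> gj j)) * c x) E = cis (- 2 * pi * (y \<bullet> gj j))" for j
      using FT1[OF gjin[of j]] by (simp add: mult.commute)
    then have "infsum (\<lambda>x. cis (- 2 * pi * (x \<bullet> \<gamma>0)) * c x) E = cis (- 2 * pi * (y \<bullet> \<gamma>0))"
      using L1 L2 LIMSEQ_unique by simp
    then show ?thesis by (simp add: mult.commute)
  qed
  show ?thesis using cz0 csum cK FT by blast
qed

end



context setting
begin

lemma recon:
  assumes cz: "\<And>x. x \<notin> E \<Longrightarrow> c x = 0" and cs: "(\<lambda>x. norm (c x)) summable_on E"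
    and cFT: "\<And>\<gamma>. \<gamma> \<in> nbhd \<Lambda> \<epsilon> \<Longrightarrow> infsum (\<lambda>x. c x * cis (- 2 * pi * (x \<bullet> \<gamma>))) E = cis (- 2 * pi * (y \<bullet> \<gamma>))"
    and fC: "f \<in> Cspec \<Lambda>" and SS: "S_set \<Lambda>"
  shows "((\<lambda>x. f x * c x * h (x - y)) has_sum f y) E"
proof -
  interpret C: discr c E by standard (use cE cz cs in auto)
  define S where "S = insert y E"
  have cS: "countable S" using cE by (simp add: S_def)
  have ES: "E \<subseteq> S" by (auto simp: S_def)
  define G1 where "G1 x = h (x - y) * c x" for x
  define G2 where "G2 x = (if x = y then 1 else 0 :: complex)" for x
  define d where "d x = G1 x - G2 x" for x
  have G1z: "\<And>x. x \<notin> E \<Longrightarrow> G1 x = 0" using cz by (simp add: G1_def)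
  have helper: "((\<lambda>x. F x * d x) has_sum (infsum (\<lambda>x. F x * h (x - y) * c x) E - F y)) S"
    if Fb: "\<And>x. norm (F x) \<le> B" for F B
  proof -
    have FB: "norm (F x * h (x - y)) \<le> B * Bh" for x
      unfolding norm_mult by (rule mult_mono) (auto intro: Fb h_bdd order_trans[OF norm_ge_zero Fb])
    have "(\<lambda>x. F x * h (x - y) * c x) summable_on E"
      by (rule abs_summable_summable'[OF summable_norm_bound[OF cs FB]])
    then have h1E: "((\<lambda>x. F x * h (x - y) * c x) has_sum infsum (\<lambda>x. F x * h (x - y) * c x) E) E"
      by (rule has_sum_infsum)
    have h1: "((\<lambda>x. F x * G1 x) has_sum infsum (\<lambda>x. F x * h (x - y) * c x) E) S"
    proof -
      have "((\<lambda>x. F x * G1 x) has_sum infsum (\<lambda>x. F x * h (x - y) * c x) E) S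
          \<longleftrightarrow> ((\<lambda>x. F x * h (x - y) * c x) has_sum infsum (\<lambda>x. F x * h (x - y) * c x) E) E"
        by (rule has_sum_cong_neutral) (use cz ES in \<open>auto simp: G1_def mult_ac\<close>)
      then show ?thesis using h1E by simp
    qed
    have h2: "((\<lambda>x. F x * G2 x) has_sum F y) S"
    proof -
      have "((\<lambda>x. F x * G2 x) has_sum F y) S \<longleftrightarrow> ((\<lambda>x. F x * G2 x) has_sum F y) {y}"
        by (rule has_sum_cong_neutral) (auto simp: G2_def S_def)
      moreover have "((\<lambda>x. F x * G2 x) has_sum F y) {y}"
        using has_sum_finite[of "{y}" "\<lambda>x. F x * G2 x"] by (simp add: G2_def)
      ultimately show ?thesis by simp
    qed
    have "((\<lambda>x. F x * G1 x + - (F x * G2 x)) has_sum (infsum (\<lambda>x. F x * h (x - y) * c x) E + - F y)) S"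
      by (rule has_sum_add[OF h1]) (simp add: has_sum_uminus h2)
    then show ?thesis by (simp add: d_def right_diff_distrib)
  qed
  have dz: "\<And>x. x \<notin> S \<Longrightarrow> d x = 0" using G1z by (auto simp: d_def G2_def S_def)
  have ds: "(\<lambda>x. norm (d x)) summable_on S"
  proof -
    have s1: "(\<lambda>x. norm (G1 x)) summable_on S"
    proof -
      have "(\<lambda>x. norm (G1 x)) summable_on E"
        unfolding G1_def by (rule summable_norm_bound[OF cs h_bdd])
      moreover have "(\<lambda>x. norm (G1 x)) summable_on S \<longleftrightarrow> (\<lambda>x. norm (G1 x)) summable_on E"
        by (rule summable_on_cong_neutral) (use G1z ES in auto)
      ultimately show ?thesis by simp
    qed
    have s2: "(\<lambda>x. norm (G2 x)) summable_on S"
    proof -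
      have "(\<lambda>x. norm (G2 x)) summable_on S \<longleftrightarrow> (\<lambda>x. norm (G2 x)) summable_on {y}"
        by (rule summable_on_cong_neutral) (auto simp: G2_def S_def)
      then show ?thesis by simp
    qed
    show ?thesis
      by (rule summable_on_comparison_test[OF summable_on_add[OF s1 s2]]) (auto simp: d_def norm_triangle_ineq4)
  qed
  interpret D: discr d S by standard (use cS dz ds in auto)
  have ftm0: "ftm (dm d) (dg d) \<gamma> = 0" if g: "\<gamma> \<in> \<Lambda>" for \<gamma>
  proof -
    have "ftm (dm d) (dg d) \<gamma> = infsum (\<lambda>x. d x * cis (- 2 * pi * (x \<bullet> \<gamma>))) S" by (rule D.dm_ftm)
    also have "\<dots> = infsum (\<lambda>x. cis (- 2 * pi * (x \<bullet> \<gamma>)) * d x) S" by (simp add: mult.commute)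
    also have "\<dots> = infsum (\<lambda>x. cis (- 2 * pi * (x \<bullet> \<gamma>)) * h (x - y) * c x) E - cis (- 2 * pi * (y \<bullet> \<gamma>))"
      by (rule infsumI[OF helper[where B=1]]) simp
    also have "infsum (\<lambda>x. cis (- 2 * pi * (x \<bullet> \<gamma>)) * h (x - y) * c x) E
        = infsum (\<lambda>x. (h (1 *\<^sub>R (x - y)) * cis (- 2 * pi * (x \<bullet> \<gamma>))) * c x) E"
      by (simp add: mult_ac)
    also have "\<dots> = (\<integral>x. (h (1 *\<^sub>R (x - y)) * cis (- 2 * pi * (x \<bullet> \<gamma>))) * dg c x \<partial>dm c)"
      by (rule C.dm_integral(2)[where C=Bh, symmetric]) (auto simp: norm_mult h_bdd)
    also have "\<dots> = h (1 *\<^sub>R (y - y)) * cis (- 2 * pi * (y \<bullet> \<gamma>))"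
    proof (rule transfer[OF C.dm_bcm])
      fix \<xi> :: 'a assume \<xi>: "norm \<xi> \<le> \<epsilon>"
      have "infdist (\<gamma> - 1 *\<^sub>R \<xi>) \<Lambda> \<le> infdist \<gamma> \<Lambda> + dist (\<gamma> - 1 *\<^sub>R \<xi>) \<gamma>"
        by (rule infdist_triangle)
      also have "\<dots> = norm \<xi>" using g by (simp add: dist_norm)
      finally have "\<gamma> - 1 *\<^sub>R \<xi> \<in> nbhd \<Lambda> \<epsilon>" using \<xi> by (simp add: nbhd_def)
      then show "ftm (dm c) (dg c) (\<gamma> - 1 *\<^sub>R \<xi>) = cis (- 2 * pi * (y \<bullet> (\<gamma> - 1 *\<^sub>R \<xi>)))"
        unfolding C.dm_ftm by (rule cFT)
    qed
    also have "\<dots> = cis (- 2 * pi * (y \<bullet> \<gamma>))" by (simp add: h0)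
    finally show ?thesis by simp
  qed
  obtain Bf where Bf: "\<And>x. norm (f x) \<le> Bf"
    using fC unfolding Cspec_def bounded_iff by blast
  have fm: "f \<in> borel_measurable borel"
    using fC unfolding Cspec_def by (auto intro: borel_measurable_continuous_onI)
  have "(\<integral>x. f x * dg d x \<partial>dm d) = 0"
    using SS fC D.dm_bcm ftm0 unfolding S_set_def by blast
  moreover have "(\<integral>x. f x * dg d x \<partial>dm d) = infsum (\<lambda>x. f x * d x) S"
    by (rule D.dm_integral(2)[OF fm Bf])
  moreover have "infsum (\<lambda>x. f x * d x) S = infsum (\<lambda>x. f x * h (x - y) * c x) E - f y"
    by (rule infsumI[OF helper[OF Bf]])
  ultimately have eq: "infsum (\<lambda>x. f x * h (x - y) * c x) E = f y" by simp
  have FB: "norm (f x * h (x - y)) \<le> Bf * Bh" for x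
    unfolding norm_mult by (rule mult_mono) (auto intro: Bf h_bdd order_trans[OF norm_ge_zero Bf])
  have "(\<lambda>x. f x * h (x - y) * c x) summable_on E"
    by (rule abs_summable_summable'[OF summable_norm_bound[OF cs FB]])
  then have "((\<lambda>x. f x * h (x - y) * c x) has_sum f y) E"
    using eq has_sum_infsum by fastforce
  then show ?thesis by (simp add: mult_ac)
qed

end



theorem theorem2p2:
  fixes \<Omega> :: "real \<Rightarrow> real"
    and \<Lambda> E :: "'a::euclidean_space set"
    and \<epsilon> :: real
    and h :: "'a \<Rightarrow> complex"
  assumes Om_cont: "continuous_on {0..} \<Omega>"
    and Om_pos: "\<forall>r\<ge>0. \<Omega> r > 0"
    and Om_mono: "mono_on {0..} \<Omega>"
    and Om_inf: "filterlim \<Omega> at_top at_top"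
    and Om_int1: "set_integrable lborel {1..} (\<lambda>r. \<Omega> r / r\<^sup>2)"
    and Om_int2: "integrable lborel (\<lambda>x::'a. exp (- \<Omega> (norm x)))"
    and Om_pow: "\<exists>a<1. \<exists>r0\<ge>0. \<forall>r\<ge>r0. \<Omega> r > r powr a"
    and Lam: "compact \<Lambda>" "S_set \<Lambda>" "strict_mult \<Lambda>"
    and E: "closed E" "separated E"
    and bal: "balayage E \<Lambda>"
    and eps: "\<epsilon> > 0" "Kbal E (nbhd \<Lambda> \<epsilon>) < \<infinity>"
    and h_int: "integrable lborel h"
    and h_cont: "continuous_on UNIV h"
    and h0: "h 0 = 1"
    and h_supp: "\<forall>\<gamma>. norm \<gamma> > \<epsilon> \<longrightarrow> ft h \<gamma> = 0"
    and h_decay: "\<exists>C R. \<forall>x. norm x \<ge> R \<longrightarrow> cmod (h x) \<le> C * exp (- \<Omega> (norm x))"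
  shows "\<exists>a :: 'a \<Rightarrow> 'a \<Rightarrow> complex.
     (\<forall>y. (\<lambda>x. cmod (a y x)) summable_on E \<and>
          (\<forall>\<gamma>\<in>nbhd \<Lambda> \<epsilon>. infsum (\<lambda>x. a y x * cis (- 2 * pi * (x \<bullet> \<gamma>))) E
                             = cis (- 2 * pi * (y \<bullet> \<gamma>)))) \<and>
     (SUP y. ereal (infsum (\<lambda>x. cmod (a y x)) E)) \<le> Kbal E (nbhd \<Lambda> \<epsilon>) \<and>
     Kbal E (nbhd \<Lambda> \<epsilon>) < \<infinity> \<and>
     (\<forall>y. \<forall>f\<in>Cspec \<Lambda>. ((\<lambda>x. f x * a y x * h (x - y)) has_sum f y) E) \<and>
     (\<forall>y. \<forall>\<gamma>\<in>\<Lambda>. ((\<lambda>x. a y x * h (x - y) * cis (2 * pi * (x \<bullet> \<gamma>)))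
                      has_sum cis (2 * pi * (y \<bullet> \<gamma>))) E)"
proof -
  obtain Bh where Bh: "\<And>x. norm (h x) \<le> Bh"
    using h_props(2)[OF Om_inf h_int h_cont h_supp h_decay] by blast
  have Hint: "integrable lborel (ft h)"
    by (rule h_props(3)[OF Om_inf h_int h_cont h_supp h_decay])
  have hc0: "\<And>\<eta>. \<eta> > 0 \<Longrightarrow> \<exists>R. \<forall>x. norm x \<ge> R \<longrightarrow> norm (h x) \<le> \<eta>"
    by (rule h_props(1)[OF Om_inf h_int h_cont h_supp h_decay])
  have K0': "ereal 0 \<le> Kbal E (nbhd \<Lambda> \<epsilon>)" unfolding Kbal_def
    by (rule Inf_greatest) (auto simp: zero_ereal_def)
  obtain K0 where Kb: "Kbal E (nbhd \<Lambda> \<epsilon>) = ereal K0"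
    using K0' eps(2) by (cases "Kbal E (nbhd \<Lambda> \<epsilon>)") auto
  interpret S: setting h Bh \<Lambda> E \<epsilon> K0
  proof (rule setting.intro)
    show "hctx h Bh" by (rule hctx.intro[OF h_int h_cont Bh Hint])
    show "setting_axioms h \<Lambda> E \<epsilon> K0"
      by (rule setting_axioms.intro) (use eps h_supp h0 hc0 Lam E Kb in auto)
  qed
  have "\<forall>y. \<exists>c. (\<forall>x. x \<notin> E \<longrightarrow> c x = 0) \<and> (\<lambda>x. norm (c x)) summable_on E \<and> infsum (\<lambda>x. norm (c x)) E \<le> K0
     \<and> (\<forall>\<gamma>\<in>nbhd \<Lambda> \<epsilon>. infsum (\<lambda>x. c x * cis (- 2 * pi * (x \<bullet> \<gamma>))) E = cis (- 2 * pi * (y \<bullet> \<gamma>)))"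
    using S.construct by blast
  from choice[OF this] obtain a where
    az: "\<And>y x. x \<notin> E \<Longrightarrow> a y x = 0" and
    as: "\<And>y. (\<lambda>x. norm (a y x)) summable_on E" and
    aK: "\<And>y. infsum (\<lambda>x. norm (a y x)) E \<le> K0" and
    aF: "\<And>y \<gamma>. \<gamma> \<in> nbhd \<Lambda> \<epsilon> \<Longrightarrow> infsum (\<lambda>x. a y x * cis (- 2 * pi * (x \<bullet> \<gamma>))) E = cis (- 2 * pi * (y \<bullet> \<gamma>))"
    by blast
  have rec: "((\<lambda>x. f x * a y x * h (x - y)) has_sum f y) E" if "f \<in> Cspec \<Lambda>" for f y
    by (rule S.recon[OF az as aF that Lam(2)])
  show ?thesis
  proof (intro exI[of _ a] conjI allI ballI)
    fix y show "(\<lambda>x. cmod (a y x)) summable_on E" by (rule as)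
  next
    fix y \<gamma> assume "\<gamma> \<in> nbhd \<Lambda> \<epsilon>"
    then show "infsum (\<lambda>x. a y x * cis (- 2 * pi * (x \<bullet> \<gamma>))) E = cis (- 2 * pi * (y \<bullet> \<gamma>))"
      by (rule aF)
  next
    show "(SUP y. ereal (infsum (\<lambda>x. cmod (a y x)) E)) \<le> Kbal E (nbhd \<Lambda> \<epsilon>)"
      unfolding Kb by (rule SUP_least) (simp add: aK)
  next
    show "Kbal E (nbhd \<Lambda> \<epsilon>) < \<infinity>" by (rule eps(2))
  next
    fix y f assume "f \<in> Cspec \<Lambda>"
    then show "((\<lambda>x. f x * a y x * h (x - y)) has_sum f y) E" by (rule rec)
  next
    fix y \<gamma> assume g: "\<gamma> \<in> \<Lambda>"
    have "((\<lambda>x. cis (2 * pi * (x \<bullet> \<gamma>)) * a y x * h (x - y)) has_sum cis (2 * pi * (y \<bullet> \<gamma>))) E"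
      by (rule rec[OF cis_Cspec[OF g]])
    then show "((\<lambda>x. a y x * h (x - y) * cis (2 * pi * (x \<bullet> \<gamma>))) has_sum cis (2 * pi * (y \<bullet> \<gamma>))) E"
      by (simp add: mult_ac)
  qed
qed


end
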